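(* Let $g\ge 1$, $0\le i\le g$, and let $s$ be a positive integer such that $16$ divides $2^i s$. Let $\Phi$ be the Siegel $\Phi$-operator. Then: (1) if $0<i<g$, $\Phi(S_{i,s}^g)=2^{i+1}S_{i,s}^{g-1}+S_{i-1,2s}^{g-1}$; (2) if $i=g$, $\Phi(S_{g,s}^g)=S_{g-1,2s}^{g-1}$; (3) if $i=0$, $\Phi(S_{0,s}^g)=2\,S_{0,s}^{g-1}$.
   Context: A characteristic in genus $g$ is $m=[\varepsilon,\delta]\in\mathbb{F}_2^{2g}$ with $\varepsilon,\delta\in\mathbb{F}_2^g$; it is even if $\varepsilon\cdot\delta=0\in\mathbb{F}_2$. For $\tau\in\mathcal{H}_g$ (Siegel upper half space), $\theta_m(\tau)=\sum_{n\in\mathbb{Z}^g}\exp\big(\pi i\,[(n+\varepsilon/2)^t\tau(n+\varepsilon/2)+2(n+\varepsilon/2)^t\delta/2]\big)$, with $\varepsilon,\delta$ regarded as $0/1$ integer vectors. For $m=[\varepsilon,\delta]$, $n=[\varepsilon_1,\delta_1]$ put $e(m,n)=(-1)^{\varepsilon\cdot\delta_1+\varepsilon_1\cdot\delta}$. A subspace $V\subset\mathbb{F}_2^{2g}$ is isotropic if $e(m,n)=1$ for all $m,n\in V$; a coset $V+m$ is even if all its elements are even. For a finite set $C$ of characteristics, $P(C)=\prod_{n\in C}\theta_n$. For $0\le i\le g$ and a positive integer $s$, $S_{i,s}^g=\sum_{V+m}P(V+m)^s$, summed over all distinct even cosets $V+m$ of all $i$-dimensional isotropic subspaces $V\subset\mathbb{F}_2^{2g}$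 (for $i=0$ these are single even characteristics). In genus $0$ the only characteristic is the empty one, with $\theta=1$, so $S_{0,s}^0=1$. The Siegel operator is $\Phi(f)(\tau_1)=\lim_{\lambda\to+\infty}f\begin{pmatrix}\tau_1&0\\0&i\lambda\end{pmatrix}$ for $\tau_1\in\mathcal{H}_{g-1}$ (for $g=1$, $\Phi(f)=\lim_{\lambda\to+\infty}f(i\lambda)$). *)

theory Defs
  imports "HOL-Analysis.Analysis"
begin

text \<open>Genus-g objects are represented with explicit carriers indexed by nat:
  a g x g complex matrix is a function nat => nat => complex vanishing outside {..<g}^2,
  a vector of F_2^g is a function nat => bool vanishing outside {..<g}.\<close>

type_synonym cmat = "nat \<Rightarrow> nat \<Rightarrow> complex"
type_synonym char = "(nat \<Rightarrow> bool) \<times> (nat \<Rightarrow> bool)"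

definition siegel_H :: "nat \<Rightarrow> cmat set" where
  "siegel_H g = {\<tau>. (\<forall>j k. (g \<le> j \<or> g \<le> k) \<longrightarrow> \<tau> j k = 0)
      \<and> (\<forall>j k. \<tau> j k = \<tau> k j)
      \<and> (\<forall>x :: nat \<Rightarrow> real. (\<exists>j<g. x j \<noteq> 0) \<longrightarrow>
           (\<Sum>j<g. \<Sum>k<g. x j * Im (\<tau> j k) * x k) > 0)}"

definition chars :: "nat \<Rightarrow> char set" where
  "chars g = {(e, d). \<forall>j. g \<le> j \<longrightarrow> \<not> e j \<and> \<not> d j}"

definition czero :: char where
  "czero = (\<lambda>_. False, \<lambda>_. False)"

definition cadd :: "char \<Rightarrow> char \<Rightarrow> char" where
  "cadd m n = (\<lambda>j. fst m j \<noteq> fst n j, \<lambda>j. snd m j \<noteq> snd n j)"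

definition dotF2 :: "nat \<Rightarrow> (nat \<Rightarrow> bool) \<Rightarrow> (nat \<Rightarrow> bool) \<Rightarrow> bool" where
  "dotF2 g a b = odd (card {j. j < g \<and> a j \<and> b j})"

definition even_char :: "nat \<Rightarrow> char \<Rightarrow> bool" where
  "even_char g m = (\<not> dotF2 g (fst m) (snd m))"

definition e_one :: "nat \<Rightarrow> char \<Rightarrow> char \<Rightarrow> bool" where
  "e_one g m n = (dotF2 g (fst m) (snd n) = dotF2 g (fst n) (snd m))"

definition isotropic_subspace :: "nat \<Rightarrow> char set \<Rightarrow> bool" where
  "isotropic_subspace g V = (V \<subseteq> chars g \<and> czero \<in> V
      \<and> (\<forall>m\<in>V. \<forall>n\<in>V. cadd m n \<in> V)
      \<and> (\<forall>m\<in>V. \<forall>n\<in>V. e_one g m n))"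

text \<open>An F_2-subspace has dimension i iff it has 2^i elements.\<close>
definition even_cosets :: "nat \<Rightarrow> nat \<Rightarrow> char set set" where
  "even_cosets g i = {C. \<exists>V m. isotropic_subspace g V \<and> card V = 2 ^ i \<and> m \<in> chars g
      \<and> C = (\<lambda>v. cadd v m) ` V \<and> (\<forall>c\<in>C. even_char g c)}"

definition Zg :: "nat \<Rightarrow> (nat \<Rightarrow> int) set" where
  "Zg g = {n. \<forall>j. g \<le> j \<longrightarrow> n j = 0}"

definition theta :: "nat \<Rightarrow> char \<Rightarrow> cmat \<Rightarrow> complex" where
  "theta g m \<tau> = (\<Sum>\<^sub>\<infinity> n \<in> Zg g.
     (let x = (\<lambda>j. of_int (n j) + (if fst m j then 1/2 else 0) :: real) in
      exp (complex_of_real pi * \<i> *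
        ((\<Sum>j<g. \<Sum>k<g. complex_of_real (x j) * \<tau> j k * complex_of_real (x k))
         + (\<Sum>j<g. complex_of_real (x j * (if snd m j then 1 else 0)))))))"

definition Ssum :: "nat \<Rightarrow> nat \<Rightarrow> nat \<Rightarrow> cmat \<Rightarrow> complex" where
  "Ssum g i s \<tau> = (\<Sum>C\<in>even_cosets g i. (\<Prod>n\<in>C. theta g n \<tau>) ^ s)"

definition blk :: "nat \<Rightarrow> cmat \<Rightarrow> real \<Rightarrow> cmat" where
  "blk g \<tau>1 t = (\<lambda>j k. if j < g - 1 \<and> k < g - 1 then \<tau>1 j k
      else if j = g - 1 \<and> k = g - 1 then \<i> * complex_of_real t else 0)"

definition siegel_Phi_eq :: "nat \<Rightarrow> (cmat \<Rightarrow> complex) \<Rightarrow> (cmat \<Rightarrow> complex) \<Rightarrow> bool" where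
  "siegel_Phi_eq g f F = (\<forall>\<tau>1\<in>siegel_H (g - 1). ((\<lambda>t. f (blk g \<tau>1 t)) \<longlongrightarrow> F \<tau>1) at_top)"

end

theory Submission
  imports Defs "HOL-Real_Asymp.Real_Asymp"
begin


lemma cadd_comm: "cadd m n = cadd n m"
  by (auto simp: cadd_def fun_eq_iff)
lemma cadd_assoc: "cadd (cadd a b) c = cadd a (cadd b c)"
  by (auto simp: cadd_def fun_eq_iff)
lemma cadd_self[simp]: "cadd a a = czero"
  by (auto simp: cadd_def czero_def fun_eq_iff)
lemma cadd_czero[simp]: "cadd a czero = a" "cadd czero a = a"
  by (auto simp: cadd_def czero_def fun_eq_iff)
lemma cadd_cancel1[simp]: "cadd a (cadd a b) = b"
  by (cases b) (auto simp: cadd_def fun_eq_iff)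
lemma cadd_cancel2[simp]: "cadd (cadd b a) a = b"
  by (cases b) (auto simp: cadd_def fun_eq_iff)
lemma cadd_fst: "fst (cadd a b) = (\<lambda>j. fst a j \<noteq> fst b j)" and cadd_snd: "snd (cadd a b) = (\<lambda>j. snd a j \<noteq> snd b j)"
  by (auto simp: cadd_def)
lemma cadd_inj[simp]: "cadd a b = cadd a c \<longleftrightarrow> b = c" "cadd b a = cadd c a \<longleftrightarrow> b = c"
  by (metis cadd_cancel1, metis cadd_cancel2)

lemma chars_iff: "m \<in> chars g \<longleftrightarrow> (\<forall>j. g \<le> j \<longrightarrow> \<not> fst m j \<and> \<not> snd m j)"
  by (cases m) (simp add: chars_def)
lemma chars_cadd: "m \<in> chars g \<Longrightarrow> n \<in> chars g \<Longrightarrow> cadd m n \<in> chars g"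
  by (simp add: chars_iff cadd_fst cadd_snd)
lemma czero_chars[simp]: "czero \<in> chars g"
  by (auto simp: chars_iff czero_def)

lemma finite_chars: "finite (chars g)"
proof -
  have "chars g \<subseteq> (\<lambda>(A,B). (\<lambda>j. j \<in> A, \<lambda>j. j \<in> B)) ` (Pow {..<g} \<times> Pow {..<g})"
  proof
    fix m assume "m \<in> chars g"
    then have "m = (\<lambda>j. j \<in> {j. j<g \<and> fst m j}, \<lambda>j. j \<in> {j. j<g \<and> snd m j})"
      by (cases m) (auto simp: chars_iff fun_eq_iff; meson leI)
    then show "m \<in> (\<lambda>(A,B). (\<lambda>j. j \<in> A, \<lambda>j. j \<in> B)) ` (Pow {..<g} \<times> Pow {..<g})"
      by (intro image_eqI[where x="({j. j<g \<and> fst m j}, {j. j<g \<and> snd m j})"]) auto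
  qed
  then show ?thesis by (rule finite_subset) auto
qed

lemma dotF2_0[simp]: "dotF2 0 a b = False"
  by (simp add: dotF2_def)

lemma dotF2_Suc: "dotF2 (Suc h) a b = (dotF2 h a b \<noteq> (a h \<and> b h))"
proof -
  have e: "{j. j < Suc h \<and> a j \<and> b j} = {j. j<h \<and> a j \<and> b j} \<union> (if a h \<and> b h then {h} else {})"
    by (auto simp: less_Suc_eq)
  show ?thesis unfolding dotF2_def e by (auto simp: card_insert_if)
qed

lemma dotF2_cong: "(\<And>j. j < g \<Longrightarrow> a j = a' j) \<Longrightarrow> (\<And>j. j < g \<Longrightarrow> b j = b' j) \<Longrightarrow> dotF2 g a b = dotF2 g a' b'"
  unfolding dotF2_def by (rule arg_cong[where f="\<lambda>S. odd (card S)"]) auto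

lemma dotF2_addl: "dotF2 g (\<lambda>j. a j \<noteq> a' j) b = (dotF2 g a b \<noteq> dotF2 g a' b)"
  by (induction g) (auto simp: dotF2_Suc)
lemma dotF2_addr: "dotF2 g b (\<lambda>j. a j \<noteq> a' j) = (dotF2 g b a \<noteq> dotF2 g b a')"
  by (induction g) (auto simp: dotF2_Suc)

lemma e_one_sym: "e_one g m n = e_one g n m"
  by (auto simp: e_one_def)
lemma e_one_self[simp]: "e_one g m m"
  by (auto simp: e_one_def)
lemma dotF2_cadd: "dotF2 g (fst (cadd a b)) x = (dotF2 g (fst a) x \<noteq> dotF2 g (fst b) x)"
   "dotF2 g x (snd (cadd a b)) = (dotF2 g x (snd a) \<noteq> dotF2 g x (snd b))"
  by (simp_all only: cadd_fst cadd_snd dotF2_addl dotF2_addr)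
lemma e_one_caddl: "e_one g (cadd a b) n = (e_one g a n = e_one g b n)"
  unfolding e_one_def dotF2_cadd by auto

lemma e_one_caddr: "e_one g n (cadd a b) = (e_one g n a = e_one g n b)"
  using e_one_caddl e_one_sym by metis
lemma cadd_swap1: "cadd (cadd z a) (cadd z b) = cadd a b"
  by (auto simp: cadd_def fun_eq_iff)
lemma cadd_swap2: "cadd a (cadd z b) = cadd z (cadd a b)"
  by (auto simp: cadd_def fun_eq_iff)
lemma cadd_swap3: "cadd (cadd z a) b = cadd z (cadd a b)"
  by (auto simp: cadd_def fun_eq_iff)

definition za :: "nat \<Rightarrow> char" where "za h = (\<lambda>j. j = h, \<lambda>_. False)"
definition tr :: "nat \<Rightarrow> char \<Rightarrow> char" where "tr h n = ((fst n)(h:=False), (snd n)(h:=False))"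

lemma dotF2_single: "dotF2 (Suc h) (\<lambda>j. j = h) b = b h"
proof -
  have "{j. j < Suc h \<and> j = h \<and> b j} = (if b h then {h} else {})" by auto
  then show ?thesis by (simp add: dotF2_def)
qed
lemma dotF2_false: "dotF2 g (\<lambda>_. False) b = False" "dotF2 g b (\<lambda>_. False) = False"
  by (simp_all add: dotF2_def)

lemma e_one_za: "e_one (Suc h) (za h) w = (\<not> snd w h)"
  by (simp add: e_one_def za_def dotF2_single dotF2_false)

lemma tr_cadd: "tr h (cadd a b) = cadd (tr h a) (tr h b)"
  by (auto simp: tr_def cadd_def fun_eq_iff)
lemma tr_czero[simp]: "tr h czero = czero"
  by (auto simp: tr_def czero_def fun_eq_iff)
lemma tr_chars: "n \<in> chars (Suc h) \<Longrightarrow> tr h n \<in> chars h"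
  by (auto simp: tr_def chars_iff)
lemma dotF2_tr: "dotF2 h a ((b)(h:=c)) = dotF2 h a b" "dotF2 h ((b)(h:=c)) a = dotF2 h b a"
  by (rule dotF2_cong; simp)+

lemma e_one_tr:
  assumes "\<not> snd a h \<or> \<not> fst b h" "\<not> snd b h \<or> \<not> fst a h"
  shows "e_one h (tr h a) (tr h b) = e_one (Suc h) a b"
  using assms by (auto simp: e_one_def tr_def dotF2_Suc dotF2_tr)

lemma isotropic_finite: "isotropic_subspace g V \<Longrightarrow> finite V"
  unfolding isotropic_subspace_def using finite_chars finite_subset by blast

lemma card_le_2: "finite A \<Longrightarrow> card (A \<union> f ` A) \<le> 2 * card A"
  by (metis card_Un_le card_image_le le_trans mult_2 add_le_mono order_refl)

lemma iso_bound: "isotropic_subspace h V \<Longrightarrow> card V \<le> 2 ^ h"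
proof (induction h arbitrary: V)
  case 0
  then have "V \<subseteq> {czero}" by (auto simp: isotropic_subspace_def chars_iff czero_def fun_eq_iff)
  then have "card V \<le> card {czero}" by (intro card_mono) auto
  then show ?case by simp
next
  case (Suc h)
  have A: "card W \<le> 2 ^ Suc h" if W: "isotropic_subspace (Suc h) W" "za h \<in> W" for W
  proof -
    have fW: "finite W" using W isotropic_finite by blast
    have sn: "\<not> snd w h" if "w \<in> W" for w
      using W that by (metis isotropic_subspace_def e_one_za)
    have "isotropic_subspace h (tr h ` W)"
      using W unfolding isotropic_subspace_def
      apply (intro conjI)
      subgoal using tr_chars by blast
      subgoal by (metis image_eqI tr_czero)
      subgoal by (auto simp flip: tr_cadd)
      subgoal using sn by (auto simp: e_one_tr)
      done
    then have c1: "card (tr h ` W) \<le> 2 ^ h" by (rule Suc.IH)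
    have "W \<subseteq> tr h ` W \<union> cadd (za h) ` (tr h ` W)"
    proof
      fix w assume w: "w \<in> W"
      show "w \<in> tr h ` W \<union> cadd (za h) ` (tr h ` W)"
      proof (cases "fst w h")
        case False
        then have "w = tr h w" using sn[OF w] by (cases w) (auto simp: tr_def fun_eq_iff)
        then show ?thesis using w by blast
      next
        case True
        then have "w = cadd (za h) (tr h w)" using sn[OF w]
          by (cases w) (auto simp: tr_def za_def cadd_def fun_eq_iff)
        then show ?thesis using w by blast
      qed
    qed
    then have "card W \<le> card (tr h ` W \<union> cadd (za h) ` (tr h ` W))"
      by (intro card_mono) (auto intro: fW)
    also have "\<dots> \<le> 2 * card (tr h ` W)" by (rule card_le_2) (use fW in auto)
    finally show ?thesis using c1 by simp
  qed
  show ?case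
  proof (cases "za h \<in> V")
    case True
    then show ?thesis using A Suc.prems by blast
  next
    case False
    define Va where "Va = {v\<in>V. \<not> snd v h}"
    have fV: "finite V" using Suc.prems isotropic_finite by blast
    have fVa: "finite Va" using fV Va_def by auto
    have V: "V \<subseteq> chars (Suc h)" "czero \<in> V" "\<And>m n. m \<in> V \<Longrightarrow> n \<in> V \<Longrightarrow> cadd m n \<in> V"
      "\<And>m n. m \<in> V \<Longrightarrow> n \<in> V \<Longrightarrow> e_one (Suc h) m n"
      using Suc.prems by (auto simp: isotropic_subspace_def)
    have zach: "za h \<in> chars (Suc h)" by (auto simp: za_def chars_iff)
    have eza: "e_one (Suc h) (za h) v" if "v \<in> Va" for v using that by (simp add: Va_def e_one_za)
    have zz: "cadd (za h) (za h) = czero" by simp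
    have "isotropic_subspace (Suc h) (Va \<union> cadd (za h) ` Va)"
      unfolding isotropic_subspace_def
    proof (intro conjI ballI)
      show "Va \<union> cadd (za h) ` Va \<subseteq> chars (Suc h)"
        using V(1) zach chars_cadd unfolding Va_def by blast
      show "czero \<in> Va \<union> cadd (za h) ` Va" using V(2) by (simp add: Va_def czero_def)
      fix m n assume m: "m \<in> Va \<union> cadd (za h) ` Va" and n: "n \<in> Va \<union> cadd (za h) ` Va"
      have cl: "cadd a b \<in> Va" if "a \<in> Va" "b \<in> Va" for a b
        using that V(3) by (auto simp: Va_def cadd_snd)
      show "cadd m n \<in> Va \<union> cadd (za h) ` Va"
      proof -
        obtain a where a: "a \<in> Va" "m = a \<or> m = cadd (za h) a" using m by blast
        obtain b where b: "b \<in> Va" "n = b \<or> n = cadd (za h) b" using n by blast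
        have ab: "cadd a b \<in> Va" using cl a b by blast
        from a(2) b(2) show ?thesis using ab by (elim disjE) (auto simp add: cadd_swap1 cadd_swap2[of _ "za h"] cadd_swap3[of "za h"])
      qed
      have e1: "e_one (Suc h) a b" if "a \<in> Va" "b \<in> Va" for a b using that V(4) by (auto simp: Va_def)
      have ezaR: "e_one (Suc h) v (za h)" if "v \<in> Va" for v using eza[OF that] e_one_sym by metis
      show "e_one (Suc h) m n"
      proof -
        obtain a where a: "a \<in> Va" "m = a \<or> m = cadd (za h) a" using m by blast
        obtain b where b: "b \<in> Va" "n = b \<or> n = cadd (za h) b" using n by blast
        have f: "e_one (Suc h) a b" "e_one (Suc h) (za h) a" "e_one (Suc h) a (za h)"
          "e_one (Suc h) (za h) b" "e_one (Suc h) b (za h)"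
          using e1 eza ezaR a(1) b(1) by blast+
        from a(2) b(2) show ?thesis using f by (elim disjE) (simp_all add: e_one_caddl e_one_caddr)
      qed
    qed
    moreover have "czero \<in> Va" using V(2) by (simp add: Va_def czero_def)
    then have "za h \<in> Va \<union> cadd (za h) ` Va" by (metis cadd_czero(1) image_eqI UnI2)
    ultimately have cW: "card (Va \<union> cadd (za h) ` Va) \<le> 2 ^ Suc h" using A by blast
    have disj: "Va \<inter> cadd (za h) ` Va = {}"
    proof (rule ccontr)
      assume "Va \<inter> cadd (za h) ` Va \<noteq> {}"
      then obtain a b where "a \<in> Va" "b \<in> Va" "a = cadd (za h) b" by auto
      then have "za h = cadd a b" by (simp add: cadd_assoc)
      then show False using False V(3) \<open>a \<in> Va\<close> \<open>b \<in> Va\<close> Va_def by auto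
    qed
    have "card (Va \<union> cadd (za h) ` Va) = card Va + card (cadd (za h) ` Va)"
      using disj fVa by (simp add: card_Un_disjoint)
    also have "card (cadd (za h) ` Va) = card Va" by (rule card_image) (auto intro: inj_onI)
    finally have cVa: "2 * card Va \<le> 2 ^ Suc h" using cW by simp
    have "card V \<le> 2 * card Va"
    proof (cases "\<exists>u\<in>V. snd u h")
      case True
      then obtain u where u: "u \<in> V" "snd u h" by blast
      have "V \<subseteq> Va \<union> cadd u ` Va"
      proof
        fix v assume v: "v \<in> V"
        show "v \<in> Va \<union> cadd u ` Va"
        proof (cases "snd v h")
          case True
          then have "cadd u v \<in> Va" using u v V(3) by (auto simp: Va_def cadd_snd)
          then show ?thesis by (metis UnI2 cadd_cancel1 image_eqI)
        qed (use v Va_def in auto)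
      qed
      then have "card V \<le> card (Va \<union> cadd u ` Va)" by (intro card_mono) (auto intro: fVa)
      then show ?thesis using card_le_2[OF fVa, of "cadd u"] by linarith
    next
      case False
      then have "V = Va" by (auto simp: Va_def)
      then show ?thesis by simp
    qed
    then show ?thesis using cVa by simp
  qed
qed

lemma even_cosets_empty: "h < i \<Longrightarrow> even_cosets h i = {}"
proof -
  assume "h < i"
  then have "(2::nat) ^ h < 2 ^ i" by simp
  then show ?thesis using iso_bound unfolding even_cosets_def by fastforce
qed


definition Hom :: "char set \<Rightarrow> (char \<Rightarrow> bool) set" where
  "Hom V = {\<phi>. (\<forall>v\<in>V. \<forall>w\<in>V. \<phi> (cadd v w) = (\<phi> v \<noteq> \<phi> w)) \<and> (\<forall>x. x \<notin> V \<longrightarrow> \<phi> x = False)}"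

lemma Hom_zero: "\<phi> \<in> Hom V \<Longrightarrow> czero \<in> V \<Longrightarrow> \<phi> czero = False"
proof -
  assume "\<phi> \<in> Hom V" "czero \<in> V"
  then have "\<phi> (cadd czero czero) = (\<phi> czero \<noteq> \<phi> czero)" unfolding Hom_def by blast
  then show ?thesis by simp
qed

lemma finite_Hom: "finite V \<Longrightarrow> finite (Hom V)"
proof -
  assume fV: "finite V"
  have "Hom V \<subseteq> (\<lambda>S x. x \<in> S) ` Pow V"
  proof
    fix \<phi> assume "\<phi> \<in> Hom V"
    then have "\<forall>x. x \<notin> V \<longrightarrow> \<phi> x = False" unfolding Hom_def by blast
    then have "\<phi> = (\<lambda>x. x \<in> {x\<in>V. \<phi> x})" by blast
    then show "\<phi> \<in> (\<lambda>S x. x \<in> S) ` Pow V" by blast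
  qed
  moreover have "finite ((\<lambda>S x. x \<in> S) ` Pow V)" using fV by simp
  ultimately show ?thesis by (rule finite_subset)
qed

lemma card_Hom:
  "finite V \<Longrightarrow> czero \<in> V \<Longrightarrow> (\<forall>v\<in>V. \<forall>w\<in>V. cadd v w \<in> V) \<Longrightarrow> card (Hom V) = card V"
proof (induction "card V" arbitrary: V rule: less_induct)
  case less
  note fV = less.prems(1) and z = less.prems(2) and cl = less.prems(3)
  show ?case
  proof (cases "V = {czero}")
    case True
    have "Hom V = {\<lambda>_. False}"
    proof
      show "Hom V \<subseteq> {\<lambda>_. False}"
      proof
        fix \<phi> assume \<phi>: "\<phi> \<in> Hom V"
        have "\<phi> x = False" for x
        proof (cases "x = czero")
          case True then show ?thesis using Hom_zero[OF \<phi> z] by simp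
        next
          case False then show ?thesis using \<phi> \<open>V = {czero}\<close> unfolding Hom_def by blast
        qed
        then show "\<phi> \<in> {\<lambda>_. False}" by auto
      qed
      show "{\<lambda>_. False} \<subseteq> Hom V" by (auto simp: Hom_def)
    qed
    then show ?thesis using True by simp
  next
    case False
    then obtain v0 where v0: "v0 \<in> V" "v0 \<noteq> czero" using z by blast
    obtain \<kappa> :: "char \<Rightarrow> bool" where kap: "\<And>x y. \<kappa> (cadd x y) = (\<kappa> x \<noteq> \<kappa> y)" "\<kappa> v0"
    proof -
      from v0(2) obtain j where "fst v0 j \<or> snd v0 j"
        by (cases v0) (auto simp: czero_def fun_eq_iff)
      then show ?thesis
      proof
        assume "fst v0 j" then show ?thesis by (intro that[of "\<lambda>x. fst x j"]) (auto simp: cadd_fst)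
      next
        assume "snd v0 j" then show ?thesis by (intro that[of "\<lambda>x. snd x j"]) (auto simp: cadd_snd)
      qed
    qed
    define V0 where "V0 = {v\<in>V. \<not> \<kappa> v}"
    have kz: "\<not> \<kappa> czero" using kap(1)[of czero czero] by simp
    have fV0: "finite V0" using fV V0_def by simp
    have z0: "czero \<in> V0" using z kz V0_def by simp
    have cl0: "\<forall>v\<in>V0. \<forall>w\<in>V0. cadd v w \<in> V0"
    proof (intro ballI)
      fix v w assume vw: "v \<in> V0" "w \<in> V0"
      then have "cadd v w \<in> V" using cl unfolding V0_def by blast
      moreover have "\<not> \<kappa> (cadd v w)" using vw unfolding V0_def by (simp add: kap(1))
      ultimately show "cadd v w \<in> V0" unfolding V0_def by blast
    qed
    have sub0: "V0 \<subseteq> V" unfolding V0_def by blast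
    have "v0 \<notin> V0" using kap(2) unfolding V0_def by blast
    then have "V0 \<subset> V" using sub0 v0(1) by blast
    then have lt: "card V0 < card V" using fV by (rule psubset_card_mono[rotated])
    have IH: "card (Hom V0) = card V0" using less.hyps[OF lt fV0 z0 cl0] .
    have inV: "cadd v0 x \<in> V0" if x: "x \<in> V" "x \<notin> V0" for x
    proof -
      have "\<kappa> x" using x unfolding V0_def by blast
      then have "\<not> \<kappa> (cadd v0 x)" by (simp add: kap)
      moreover have "cadd v0 x \<in> V" using cl v0(1) x(1) by blast
      ultimately show ?thesis unfolding V0_def by blast
    qed
    have Vsplit: "V = V0 \<union> cadd v0 ` V0"
    proof
      show "V \<subseteq> V0 \<union> cadd v0 ` V0"
      proof
        fix x assume x: "x \<in> V"
        show "x \<in> V0 \<union> cadd v0 ` V0"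
        proof (cases "\<kappa> x")
          case True
          then have "cadd v0 x \<in> V0" using inV x unfolding V0_def by blast
          then show ?thesis by (metis UnI2 cadd_cancel1 image_eqI)
        qed (use x V0_def in blast)
      qed
      show "V0 \<union> cadd v0 ` V0 \<subseteq> V" using cl v0(1) sub0 by blast
    qed
    have notV0: "x \<in> V0 \<Longrightarrow> cadd v0 x \<notin> V0" for x by (simp add: V0_def kap)
    have disj: "V0 \<inter> cadd v0 ` V0 = {}" using notV0 by blast
    have cV: "card V = 2 * card V0"
    proof -
      have "card V = card (V0 \<union> cadd v0 ` V0)" using Vsplit by simp
      also have "\<dots> = card V0 + card (cadd v0 ` V0)"
        by (rule card_Un_disjoint) (use fV0 disj in auto)
      moreover have "card (cadd v0 ` V0) = card V0" by (rule card_image) (auto intro: inj_onI)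
      ultimately show ?thesis by simp
    qed
    define F where "F \<phi> = ((\<lambda>x. if x \<in> V0 then \<phi> x else False), \<phi> v0)" for \<phi> :: "char \<Rightarrow> bool"
    define G where "G p = (\<lambda>x. if x \<in> V0 then fst p x else if x \<in> V then (fst p (cadd v0 x) \<noteq> snd p) else False)"
      for p :: "(char \<Rightarrow> bool) \<times> bool"
    have v0n: "v0 \<notin> V0" using kap V0_def by simp
    have bij: "bij_betw F (Hom V) (Hom V0 \<times> UNIV)"
    proof (rule bij_betw_byWitness[where f'=G])
      show "\<forall>\<phi>\<in>Hom V. G (F \<phi>) = \<phi>"
      proof
        fix \<phi> assume \<phi>: "\<phi> \<in> Hom V"
        show "G (F \<phi>) = \<phi>"
        proof
          fix x
          show "G (F \<phi>) x = \<phi> x"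
          proof (cases "x \<in> V0")
            case False
            show ?thesis
            proof (cases "x \<in> V")
              case True
              have "\<phi> (cadd v0 (cadd v0 x)) = (\<phi> v0 \<noteq> \<phi> (cadd v0 x))"
                using \<phi> v0 inV[OF True False] Vsplit unfolding Hom_def by blast
              then show ?thesis using False True inV[OF True False] by (auto simp: G_def F_def)
            next
              case False
              moreover have "\<phi> x = False" using \<phi> False unfolding Hom_def by blast
              ultimately show ?thesis using \<open>x \<notin> V0\<close> by (simp add: G_def F_def)
            qed
          qed (simp add: G_def F_def)
        qed
      qed
      show "\<forall>p\<in>Hom V0 \<times> UNIV. F (G p) = p"
      proof
        fix p assume p: "p \<in> Hom V0 \<times> (UNIV :: bool set)"
        have "(\<lambda>x. if x \<in> V0 then G p x else False) = fst p"
        proof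
          fix x show "(if x \<in> V0 then G p x else False) = fst p x"
          proof (cases "x \<in> V0")
            case False
            have "fst p \<in> Hom V0" using p by auto
            then have "fst p x = False" using False unfolding Hom_def by blast
            then show ?thesis using False by simp
          qed (simp add: G_def)
        qed
        moreover have "G p v0 = snd p" using p v0 v0n z0 Hom_zero[of "fst p" V0]
          by (auto simp: G_def)
        ultimately show "F (G p) = p" by (simp add: F_def)
      qed
      show "F ` Hom V \<subseteq> Hom V0 \<times> UNIV"
      proof
        fix p assume "p \<in> F ` Hom V"
        then obtain \<phi> where \<phi>: "\<phi> \<in> Hom V" and p: "p = F \<phi>" by blast
        have h\<phi>: "\<phi> (cadd v w) = (\<phi> v \<noteq> \<phi> w)" if "v \<in> V" "w \<in> V" for v w
          using \<phi> that unfolding Hom_def by blast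
        have sub: "V0 \<subseteq> V" using Vsplit by blast
        have "(\<lambda>x. if x \<in> V0 then \<phi> x else False) \<in> Hom V0"
          unfolding Hom_def
        proof (intro CollectI conjI ballI allI impI)
          fix v w assume vw: "v \<in> V0" "w \<in> V0"
          have e: "\<phi> (cadd v w) = (\<phi> v \<noteq> \<phi> w)" using vw sub h\<phi> by blast
          have "cadd v w \<in> V0" using cl0 vw by blast
          then show "(if cadd v w \<in> V0 then \<phi> (cadd v w) else False) =
            ((if v \<in> V0 then \<phi> v else False) \<noteq> (if w \<in> V0 then \<phi> w else False))"
            using e vw by simp
        qed simp
        then show "p \<in> Hom V0 \<times> UNIV" by (simp add: p F_def)
      qed
      show "G ` (Hom V0 \<times> UNIV) \<subseteq> Hom V"
      proof
        fix q assume "q \<in> G ` (Hom V0 \<times> UNIV)"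
        then obtain \<psi> c where \<psi>: "\<psi> \<in> Hom V0" and q: "q = G (\<psi>, c)" by auto
        have hom: "\<psi> (cadd a b) = (\<psi> a \<noteq> \<psi> b)" if "a \<in> V0" "b \<in> V0" for a b
          using \<psi> that by (auto simp: Hom_def)
        show "q \<in> Hom V"
          unfolding Hom_def
        proof (intro CollectI conjI ballI allI impI)
          fix x assume "x \<notin> V" then show "q x = False" using Vsplit by (auto simp: q G_def)
        next
          fix x y assume x: "x \<in> V" and y: "y \<in> V"
          have xy: "cadd x y \<in> V" using cl x y by blast
          show "q (cadd x y) = (q x \<noteq> q y)"
          proof (cases "x \<in> V0"; cases "y \<in> V0")
            assume a: "x \<in> V0" "y \<in> V0"
            then show ?thesis using cl0 hom by (simp add: q G_def)
          next
            assume a: "x \<in> V0" "y \<notin> V0"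
            have "\<not> \<kappa> x" "\<kappa> y" using a y by (auto simp: V0_def)
            then have n: "cadd x y \<notin> V0" by (simp add: V0_def kap(1))
            have e: "\<psi> (cadd v0 (cadd x y)) = (\<psi> x \<noteq> \<psi> (cadd v0 y))"
              using hom[OF a(1) inV[OF y a(2)]] by (simp add: cadd_swap2)
            have q1: "q (cadd x y) = (\<psi> (cadd v0 (cadd x y)) \<noteq> c)" using n xy by (simp add: q G_def)
            have q2: "q x = \<psi> x" using a by (simp add: q G_def)
            have q3: "q y = (\<psi> (cadd v0 y) \<noteq> c)" using a y by (simp add: q G_def)
            show ?thesis using e q1 q2 q3 by argo
          next
            assume a: "x \<notin> V0" "y \<in> V0"
            have "\<kappa> x" "\<not> \<kappa> y" using a x by (auto simp: V0_def)
            then have n: "cadd x y \<notin> V0" by (simp add: V0_def kap(1))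
            have e: "\<psi> (cadd v0 (cadd x y)) = (\<psi> (cadd v0 x) \<noteq> \<psi> y)"
              using hom[OF inV[OF x a(1)] a(2)] by (simp add: cadd_assoc)
            have q1: "q (cadd x y) = (\<psi> (cadd v0 (cadd x y)) \<noteq> c)" using n xy by (simp add: q G_def)
            have q2: "q x = (\<psi> (cadd v0 x) \<noteq> c)" using a x by (simp add: q G_def)
            have q3: "q y = \<psi> y" using a by (simp add: q G_def)
            show ?thesis using e q1 q2 q3 by argo
          next
            assume a: "x \<notin> V0" "y \<notin> V0"
            have "\<kappa> x" "\<kappa> y" using a x y by (auto simp: V0_def)
            then have n: "cadd x y \<in> V0" using xy by (simp add: V0_def kap(1))
            have e: "\<psi> (cadd x y) = (\<psi> (cadd v0 x) \<noteq> \<psi> (cadd v0 y))"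
              using hom[OF inV[OF x a(1)] inV[OF y a(2)]] by (simp add: cadd_swap1)
            have q1: "q (cadd x y) = \<psi> (cadd x y)" using n by (simp add: q G_def)
            have q2: "q x = (\<psi> (cadd v0 x) \<noteq> c)" using a x by (simp add: q G_def)
            have q3: "q y = (\<psi> (cadd v0 y) \<noteq> c)" using a y by (simp add: q G_def)
            show ?thesis using e q1 q2 q3 by argo
          qed
        qed
      qed
    qed
    have "card (Hom V) = card (Hom V0 \<times> (UNIV :: bool set))" using bij by (rule bij_betw_same_card)
    also have "\<dots> = 2 * card V0" by (simp add: card_cartesian_product IH)
    finally show ?thesis using cV by simp
  qed
qed


definition E1 :: "nat \<Rightarrow> nat \<Rightarrow> char set set" where
  "E1 h i = {C \<in> even_cosets (Suc h) i. \<forall>n\<in>C. \<not> fst n h}"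
definition Inj :: "nat \<Rightarrow> nat \<Rightarrow> char set set" where
  "Inj h i = {C \<in> E1 h i. inj_on (tr h) C}"
definition NI :: "nat \<Rightarrow> nat \<Rightarrow> char set set" where
  "NI h i = {C \<in> E1 h i. \<not> inj_on (tr h) C}"
definition zb :: "nat \<Rightarrow> char" where "zb h = (\<lambda>_. False, \<lambda>j. j = h)"
definition setd :: "nat \<Rightarrow> char \<Rightarrow> bool \<Rightarrow> char" where "setd h n c = (fst n, (snd n)(h := c))"

lemma cadd_mm: "cadd (cadd v m) (cadd w m) = cadd v w"
  by (auto simp: cadd_def fun_eq_iff)
lemma cadd_mmm: "cadd (cadd v p) (cadd (cadd w p) p) = cadd (cadd v w) p"
  by (auto simp: cadd_def fun_eq_iff)

lemma co_m: "czero \<in> V \<Longrightarrow> C = (\<lambda>v. cadd v m) ` V \<Longrightarrow> m \<in> C"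
  by (metis cadd_czero(2) image_eqI)
lemma co_diff: "\<forall>a\<in>V. \<forall>b\<in>V. cadd a b \<in> V \<Longrightarrow> C = (\<lambda>v. cadd v m) ` V \<Longrightarrow> a \<in> C \<Longrightarrow> b \<in> C \<Longrightarrow> cadd a b \<in> V"
proof -
  assume cl: "\<forall>a\<in>V. \<forall>b\<in>V. cadd a b \<in> V" and C: "C = (\<lambda>v. cadd v m) ` V" and ab: "a \<in> C" "b \<in> C"
  from ab C obtain u w where u: "u \<in> V" "a = cadd u m" "w \<in> V" "b = cadd w m" by blast
  then have "cadd a b = cadd u w" by (simp add: cadd_mm)
  then show ?thesis using cl u by simp
qed
lemma co_add: "\<forall>a\<in>V. \<forall>b\<in>V. cadd a b \<in> V \<Longrightarrow> C = (\<lambda>v. cadd v m) ` V \<Longrightarrow> a \<in> C \<Longrightarrow> v \<in> V \<Longrightarrow> cadd a v \<in> C"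
proof -
  assume cl: "\<forall>a\<in>V. \<forall>b\<in>V. cadd a b \<in> V" and C: "C = (\<lambda>v. cadd v m) ` V" and a: "a \<in> C" and v: "v \<in> V"
  from a C obtain u where u: "u \<in> V" "a = cadd u m" by blast
  have "cadd a v = cadd (cadd u v) m" using u by (auto simp: cadd_def fun_eq_iff)
  moreover have "cadd u v \<in> V" using cl u v by blast
  ultimately show ?thesis using C by blast
qed
lemma co_triple: "\<forall>a\<in>V. \<forall>b\<in>V. cadd a b \<in> V \<Longrightarrow> C = (\<lambda>v. cadd v m) ` V \<Longrightarrow> a \<in> C \<Longrightarrow> b \<in> C \<Longrightarrow> c \<in> C
   \<Longrightarrow> cadd a (cadd b c) \<in> C"
  by (rule co_add) (auto intro: co_diff)

lemma chars_h: "n \<in> chars h \<Longrightarrow> \<not> fst n h \<and> \<not> snd n h"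
  by (simp add: chars_iff)
lemma chars_mono: "n \<in> chars h \<Longrightarrow> n \<in> chars (Suc h)"
  by (simp add: chars_iff)
lemma tr_id: "n \<in> chars h \<Longrightarrow> tr h n = n"
  by (cases n) (auto simp: tr_def chars_iff fun_eq_iff)
lemma tr_setd: "n \<in> chars h \<Longrightarrow> tr h (setd h n c) = n"
  by (cases n) (auto simp: tr_def setd_def chars_iff fun_eq_iff)
lemma setd_tr: "\<not> fst n h \<Longrightarrow> setd h (tr h n) (snd n h) = n"
  by (cases n) (auto simp: tr_def setd_def fun_eq_iff)
lemma cadd_setd: "cadd (setd h a c) (setd h b d) = setd h (cadd a b) (c \<noteq> d)"
  by (auto simp: cadd_def setd_def fun_eq_iff)
lemma fst_setd[simp]: "fst (setd h n c) = fst n" and snd_setd_h[simp]: "snd (setd h n c) h = c"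
  by (simp_all add: setd_def)
lemma setd_chars: "n \<in> chars h \<Longrightarrow> setd h n c \<in> chars (Suc h)"
  by (auto simp: chars_iff setd_def)
lemma tr_zb[simp]: "tr h (zb h) = czero"
  by (auto simp: tr_def zb_def czero_def fun_eq_iff)
lemma zb_chars: "zb h \<in> chars (Suc h)"
  by (auto simp: zb_def chars_iff)
lemma fst_zb[simp]: "fst (zb h) j = False" and snd_zb[simp]: "snd (zb h) h = True"
  by (simp_all add: zb_def)
lemma tr_fst_h[simp]: "fst (tr h n) h = False" "snd (tr h n) h = False"
  by (simp_all add: tr_def)

lemma tr_eq: "\<not> fst a h \<Longrightarrow> \<not> fst b h \<Longrightarrow> tr h a = tr h b \<Longrightarrow> snd a h = snd b h \<Longrightarrow> a = b"
proof -
  assume a: "\<not> fst a h" "\<not> fst b h" "tr h a = tr h b" "snd a h = snd b h"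
  have "a = setd h (tr h a) (snd a h)" using setd_tr[of a h] a(1) by simp
  moreover have "b = setd h (tr h b) (snd b h)" using setd_tr[of b h] a(2) by simp
  ultimately show "a = b" using a(3,4) by simp
qed

lemma even_tr: "\<not> fst n h \<Longrightarrow> even_char (Suc h) n = even_char h (tr h n)"
  by (simp add: even_char_def dotF2_Suc tr_def dotF2_tr)

lemma dotF2_single_r: "dotF2 (Suc h) b (\<lambda>j. j = h) = b h"
proof -
  have "{j. j < Suc h \<and> b j \<and> j = h} = (if b h then {h} else {})" by auto
  then show ?thesis by (simp add: dotF2_def)
qed

lemma e_one_zb: "\<not> fst v h \<Longrightarrow> e_one (Suc h) (zb h) v"
  by (simp add: e_one_def zb_def dotF2_false dotF2_single_r)

lemma iso_tr:
  assumes V: "isotropic_subspace (Suc h) V" and nf: "\<forall>v\<in>V. \<not> fst v h"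
  shows "isotropic_subspace h (tr h ` V)"
  unfolding isotropic_subspace_def
proof (intro conjI ballI)
  have V1: "V \<subseteq> chars (Suc h)" "czero \<in> V" "\<forall>m\<in>V. \<forall>n\<in>V. cadd m n \<in> V" "\<forall>m\<in>V. \<forall>n\<in>V. e_one (Suc h) m n"
    using V unfolding isotropic_subspace_def by blast+
  show "tr h ` V \<subseteq> chars h" using V1(1) tr_chars by blast
  show "czero \<in> tr h ` V" using V1(2) by (metis image_eqI tr_czero)
  fix x y assume x: "x \<in> tr h ` V" and y: "y \<in> tr h ` V"
  then obtain a b where ab: "a \<in> V" "b \<in> V" "x = tr h a" "y = tr h b" by blast
  show "cadd x y \<in> tr h ` V" using ab V1(3) by (metis image_eqI tr_cadd)
  have "e_one h (tr h a) (tr h b) = e_one (Suc h) a b"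
    using nf ab by (intro e_one_tr) blast+
  then show "e_one h x y" using V1(4) ab by simp
qed

lemma finite_even_cosets: "finite (even_cosets g i)"
proof -
  have "even_cosets g i \<subseteq> Pow (chars g)"
  proof
    fix C assume "C \<in> even_cosets g i"
    then obtain V m where V: "isotropic_subspace g V" "m \<in> chars g" "C = (\<lambda>v. cadd v m) ` V"
      unfolding even_cosets_def by blast
    have "V \<subseteq> chars g" using V(1) unfolding isotropic_subspace_def by blast
    then show "C \<in> Pow (chars g)" using V(2,3) chars_cadd by blast
  qed
  then show ?thesis using finite_chars by (meson finite_Pow_iff finite_subset)
qed

lemma even_cosets_finite_C: "C \<in> even_cosets g i \<Longrightarrow> finite C"
  unfolding even_cosets_def using isotropic_finite by blast

lemma E1_struct:
  assumes "C \<in> E1 h i"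
  obtains V m where "isotropic_subspace (Suc h) V" "card V = 2 ^ i" "m \<in> chars (Suc h)"
    "C = (\<lambda>v. cadd v m) ` V" "\<forall>c\<in>C. even_char (Suc h) c" "\<forall>v\<in>V. \<not> fst v h" "\<not> fst m h"
    "\<forall>c\<in>C. \<not> fst c h"
proof -
  from assms obtain V m where V: "isotropic_subspace (Suc h) V" "card V = 2 ^ i" "m \<in> chars (Suc h)"
    "C = (\<lambda>v. cadd v m) ` V" "\<forall>c\<in>C. even_char (Suc h) c" and nf: "\<forall>c\<in>C. \<not> fst c h"
    unfolding E1_def even_cosets_def by blast
  have cl: "\<forall>a\<in>V. \<forall>b\<in>V. cadd a b \<in> V" and z: "czero \<in> V" using V(1) by (auto simp: isotropic_subspace_def)
  have mC: "m \<in> C" using co_m[OF z V(4)] .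
  have nm: "\<not> fst m h" using nf mC by blast
  have "\<not> fst v h" if "v \<in> V" for v
  proof -
    have "cadd v m \<in> C" using V(4) that by blast
    then have "\<not> fst (cadd v m) h" using nf by blast
    then show ?thesis using nm by (simp add: cadd_fst)
  qed
  then have nv: "\<forall>v\<in>V. \<not> fst v h" by blast
  show ?thesis by (rule that[OF V(1) V(2) V(3) V(4) V(5) nv nm nf])
qed

lemma E1_tr:
  assumes "isotropic_subspace (Suc h) V" "m \<in> chars (Suc h)"
    "C = (\<lambda>v. cadd v m) ` V" "\<forall>c\<in>C. even_char (Suc h) c" "\<forall>v\<in>V. \<not> fst v h" "\<forall>c\<in>C. \<not> fst c h"
    "card (tr h ` V) = 2 ^ k"
  shows "tr h ` C = (\<lambda>w. cadd w (tr h m)) ` (tr h ` V)" "tr h ` C \<in> even_cosets h k"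
proof -
  show e: "tr h ` C = (\<lambda>w. cadd w (tr h m)) ` (tr h ` V)"
    using assms(3) by (simp add: image_image tr_cadd)
  have ev: "\<forall>c\<in>tr h ` C. even_char h c" using assms(4,6) even_tr by blast
  have "isotropic_subspace h (tr h ` V) \<and> card (tr h ` V) = 2 ^ k \<and> tr h m \<in> chars h
      \<and> tr h ` C = (\<lambda>w. cadd w (tr h m)) ` (tr h ` V) \<and> (\<forall>c\<in>tr h ` C. even_char h c)"
    using iso_tr[OF assms(1,5)] assms(7) tr_chars[OF assms(2)] e ev by blast
  then show "tr h ` C \<in> even_cosets h k"
    unfolding even_cosets_def by (intro CollectI exI[of _ "tr h ` V"] exI[of _ "tr h m"])
qed

lemma Inj_img: "C \<in> Inj h i \<Longrightarrow> tr h ` C \<in> even_cosets h i"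
proof -
  assume C: "C \<in> Inj h i"
  then have inj: "inj_on (tr h) C" and E: "C \<in> E1 h i" by (auto simp: Inj_def)
  obtain V m where V: "isotropic_subspace (Suc h) V" "card V = 2 ^ i" "m \<in> chars (Suc h)"
    "C = (\<lambda>v. cadd v m) ` V" "\<forall>c\<in>C. even_char (Suc h) c" "\<forall>v\<in>V. \<not> fst v h" "\<not> fst m h"
    "\<forall>c\<in>C. \<not> fst c h" using E1_struct[OF E] by blast
  have "inj_on (tr h) V"
  proof (rule inj_onI)
    fix v w assume vw: "v \<in> V" "w \<in> V" "tr h v = tr h w"
    then have "tr h (cadd v m) = tr h (cadd w m)" by (simp add: tr_cadd)
    moreover have "cadd v m \<in> C" "cadd w m \<in> C" using vw V(4) by auto
    ultimately have "cadd v m = cadd w m" using inj by (meson inj_onD)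
    then show "v = w" by simp
  qed
  then have "card (tr h ` V) = 2 ^ i" using V(2) by (simp add: card_image)
  then show ?thesis using E1_tr(2)[OF V(1) V(3) V(4) V(5) V(6) V(8)] by blast
qed


lemma NI_zb:
  assumes C: "C \<in> NI h i" and V: "isotropic_subspace (Suc h) V" "C = (\<lambda>v. cadd v m) ` V"
    and nf: "\<forall>c\<in>C. \<not> fst c h"
  shows "zb h \<in> V"
proof -
  have cl: "\<forall>a\<in>V. \<forall>b\<in>V. cadd a b \<in> V" using V(1) unfolding isotropic_subspace_def by blast
  from C have "\<not> inj_on (tr h) C" by (simp add: NI_def)
  then obtain a b where ab: "a \<in> C" "b \<in> C" "a \<noteq> b" "tr h a = tr h b" unfolding inj_on_def by blast
  have fa: "\<not> fst a h" "\<not> fst b h" using nf ab by blast+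
  have sn: "snd a h \<noteq> snd b h" using tr_eq[OF fa ab(4)] ab(3) by blast
  have "cadd a b = zb h"
  proof -
    have f1: "fst a j = fst b j" for j
      using arg_cong[OF ab(4), of "\<lambda>x. fst x j"] fa by (cases "j = h") (simp_all add: tr_def)
    have f2: "snd a j = snd b j" if "j \<noteq> h" for j
      using arg_cong[OF ab(4), of "\<lambda>x. snd x j"] that by (simp add: tr_def)
    show ?thesis unfolding zb_def cadd_def using f1 f2 sn by (auto simp: fun_eq_iff)
  qed
  then show ?thesis using co_diff[OF cl V(2) ab(1,2)] by simp
qed

lemma NI_facts:
  assumes C: "C \<in> NI h i"
  shows "0 < i" "tr h ` C \<in> even_cosets h (i - 1)" "\<And>c. c \<in> C \<Longrightarrow> cadd c (zb h) \<in> C"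
    "\<forall>c\<in>C. \<not> fst c h"
proof -
  have E: "C \<in> E1 h i" using C by (simp add: NI_def)
  obtain V m where V: "isotropic_subspace (Suc h) V" "card V = 2 ^ i" "m \<in> chars (Suc h)"
    "C = (\<lambda>v. cadd v m) ` V" "\<forall>c\<in>C. even_char (Suc h) c" "\<forall>v\<in>V. \<not> fst v h" "\<not> fst m h"
    "\<forall>c\<in>C. \<not> fst c h" using E1_struct[OF E] by blast
  show "\<forall>c\<in>C. \<not> fst c h" using V(8) .
  have cl: "\<forall>a\<in>V. \<forall>b\<in>V. cadd a b \<in> V" using V(1) unfolding isotropic_subspace_def by blast
  have fV: "finite V" using V(1) isotropic_finite by blast
  have z: "zb h \<in> V" using NI_zb[OF C V(1) V(4) V(8)] .
  show "cadd c (zb h) \<in> C" if "c \<in> C" for c using co_add[OF cl V(4) that z] .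
  define W where "W = {v\<in>V. \<not> snd v h}"
  have fW: "finite W" using fV W_def by simp
  have Vs: "V = W \<union> cadd (zb h) ` W"
  proof
    show "V \<subseteq> W \<union> cadd (zb h) ` W"
    proof
      fix v assume v: "v \<in> V"
      show "v \<in> W \<union> cadd (zb h) ` W"
      proof (cases "snd v h")
        case True
        have "cadd (zb h) v \<in> V" using cl z v by blast
        moreover have "\<not> snd (cadd (zb h) v) h" using True by (simp add: cadd_snd)
        ultimately have "cadd (zb h) v \<in> W" unfolding W_def by blast
        then show ?thesis by (metis UnI2 cadd_cancel1 image_eqI)
      qed (use v W_def in blast)
    qed
    show "W \<union> cadd (zb h) ` W \<subseteq> V" using cl z unfolding W_def by blast
  qed
  have disj: "W \<inter> cadd (zb h) ` W = {}"
  proof -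
    have "\<not> (x \<in> W \<and> x \<in> cadd (zb h) ` W)" for x
    proof
      assume "x \<in> W \<and> x \<in> cadd (zb h) ` W"
      then obtain w where "x \<in> W" "w \<in> W" "x = cadd (zb h) w" by blast
      then show False unfolding W_def by (simp add: cadd_snd)
    qed
    then show ?thesis by blast
  qed
  have cV: "card V = 2 * card W"
  proof -
    have "card V = card (W \<union> cadd (zb h) ` W)" using Vs by simp
    also have "\<dots> = card W + card (cadd (zb h) ` W)"
      by (rule card_Un_disjoint) (use fW disj in auto)
    moreover have "card (cadd (zb h) ` W) = card W" by (rule card_image) (auto intro: inj_onI)
    ultimately show ?thesis by simp
  qed
  have trV: "tr h ` V = tr h ` W"
  proof -
    have "tr h ` (cadd (zb h) ` W) = tr h ` W" by (simp add: image_image tr_cadd)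
    then show ?thesis using Vs by (metis image_Un Un_absorb)
  qed
  have "inj_on (tr h) W"
  proof (rule inj_onI)
    fix v w assume "v \<in> W" "w \<in> W" "tr h v = tr h w"
    then show "v = w" using V(6) tr_eq unfolding W_def by blast
  qed
  then have ctr: "card (tr h ` V) = card W" using trV by (simp add: card_image)
  have "2 ^ i = 2 * card W" using cV V(2) by simp
  then have i0: "i \<noteq> 0" by (metis even_mult_iff even_numeral odd_one power_0)
  then show "0 < i" by simp
  have "(2::nat) ^ i = 2 * 2 ^ (i - 1)" using i0 by (metis power_eq_if)
  then have "card (tr h ` V) = 2 ^ (i - 1)" using ctr \<open>2 ^ i = 2 * card W\<close> by simp
  then show "tr h ` C \<in> even_cosets h (i - 1)" using E1_tr(2)[OF V(1) V(3) V(4) V(5) V(6) V(8)] by blast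
qed

lemma NI_char:
  assumes C: "C \<in> NI h i"
  shows "C = {n. \<not> fst n h \<and> tr h n \<in> tr h ` C}"
proof
  show "C \<subseteq> {n. \<not> fst n h \<and> tr h n \<in> tr h ` C}" using NI_facts(4)[OF C] by blast
  show "{n. \<not> fst n h \<and> tr h n \<in> tr h ` C} \<subseteq> C"
  proof
    fix n assume "n \<in> {n. \<not> fst n h \<and> tr h n \<in> tr h ` C}"
    then obtain c where n: "\<not> fst n h" "c \<in> C" "tr h n = tr h c" by blast
    have fc: "\<not> fst c h" using NI_facts(4)[OF C] n(2) by blast
    show "n \<in> C"
    proof (cases "snd n h = snd c h")
      case True then show ?thesis using tr_eq[OF n(1) fc n(3)] n(2) by simp
    next
      case ne: False
      have c2: "cadd c (zb h) \<in> C" using NI_facts(3)[OF C n(2)] .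
      have t: "tr h (cadd c (zb h)) = tr h c" by (simp add: tr_cadd)
      have sn: "snd (cadd c (zb h)) h = (\<not> snd c h)" by (simp add: cadd_snd)
      have fz: "\<not> fst (cadd c (zb h)) h" using fc by (simp add: cadd_fst)
      have e1: "tr h n = tr h (cadd c (zb h))" using n(3) t by simp
      have e2: "snd n h = snd (cadd c (zb h)) h" using sn ne by simp
      have "n = cadd c (zb h)" using tr_eq[OF n(1) fz e1 e2] .
      then show ?thesis using c2 by simp
    qed
  qed
qed

lemma NI_inj: "inj_on (\<lambda>C. tr h ` C) (NI h i)"
proof (rule inj_onI)
  fix C1 C2 assume c: "C1 \<in> NI h i" "C2 \<in> NI h i" and eq: "tr h ` C1 = tr h ` C2"
  have "C1 = {n. \<not> fst n h \<and> tr h n \<in> tr h ` C1}" by (rule NI_char[OF c(1)])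
  also have "\<dots> = {n. \<not> fst n h \<and> tr h n \<in> tr h ` C2}" by (simp only: eq)
  also have "\<dots> = C2" by (rule NI_char[OF c(2), symmetric])
  finally show "C1 = C2" .
qed

lemma NI_prod:
  assumes C: "C \<in> NI h i"
  shows "(\<Prod>n\<in>C. f (tr h n)) = (\<Prod>x\<in>tr h ` C. f x) ^ 2"
proof -
  have fC: "finite C" using C unfolding NI_def E1_def by (blast intro: even_cosets_finite_C)
  have nf: "\<forall>c\<in>C. \<not> fst c h" using NI_facts(4)[OF C] .
  define A where "A = {n\<in>C. \<not> snd n h}"
  define B where "B = {n\<in>C. snd n h}"
  have CAB: "C = A \<union> B" "A \<inter> B = {}" unfolding A_def B_def by blast+
  have fA: "finite A" "finite B" using fC A_def B_def by simp_all
  have iA: "inj_on (tr h) A"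
  proof (rule inj_onI)
    fix a b assume ab: "a \<in> A" "b \<in> A" "tr h a = tr h b"
    have "\<not> fst a h" "\<not> fst b h" "snd a h = snd b h" using ab(1,2) nf unfolding A_def by blast+
    then show "a = b" using tr_eq ab(3) by blast
  qed
  have iB: "inj_on (tr h) B"
  proof (rule inj_onI)
    fix a b assume ab: "a \<in> B" "b \<in> B" "tr h a = tr h b"
    have "\<not> fst a h" "\<not> fst b h" "snd a h = snd b h" using ab(1,2) nf unfolding B_def by blast+
    then show "a = b" using tr_eq ab(3) by blast
  qed
  have flip: "cadd c (zb h) \<in> C" "snd (cadd c (zb h)) h = (\<not> snd c h)" "tr h (cadd c (zb h)) = tr h c"
    if "c \<in> C" for c using NI_facts(3)[OF C that] by (simp_all add: cadd_snd tr_cadd)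
  have trA: "tr h ` A = tr h ` C"
  proof
    show "tr h ` A \<subseteq> tr h ` C" unfolding A_def by blast
    show "tr h ` C \<subseteq> tr h ` A"
    proof
      fix x assume "x \<in> tr h ` C"
      then obtain c where c: "c \<in> C" "x = tr h c" by blast
      show "x \<in> tr h ` A"
      proof (cases "snd c h")
        case True
        then have "cadd c (zb h) \<in> A" using flip[OF c(1)] unfolding A_def by simp
        then show ?thesis using flip(3)[OF c(1)] c(2) by (metis image_eqI)
      qed (use c A_def in blast)
    qed
  qed
  have trB: "tr h ` B = tr h ` C"
  proof
    show "tr h ` B \<subseteq> tr h ` C" unfolding B_def by blast
    show "tr h ` C \<subseteq> tr h ` B"
    proof
      fix x assume "x \<in> tr h ` C"
      then obtain c where c: "c \<in> C" "x = tr h c" by blast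
      show "x \<in> tr h ` B"
      proof (cases "snd c h")
        case False
        then have "cadd c (zb h) \<in> B" using flip[OF c(1)] unfolding B_def by simp
        then show ?thesis using flip(3)[OF c(1)] c(2) by (metis image_eqI)
      qed (use c B_def in blast)
    qed
  qed
  have "(\<Prod>n\<in>C. f (tr h n)) = (\<Prod>n\<in>A. f (tr h n)) * (\<Prod>n\<in>B. f (tr h n))"
    using CAB fA by (simp add: prod.union_disjoint)
  also have "(\<Prod>n\<in>A. f (tr h n)) = (\<Prod>x\<in>tr h ` C. f x)"
    using prod.reindex[OF iA, of f] trA by simp
  also have "(\<Prod>n\<in>B. f (tr h n)) = (\<Prod>x\<in>tr h ` C. f x)"
    using prod.reindex[OF iB, of f] trB by simp
  finally show ?thesis by (simp add: power2_eq_square)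
qed


lemma even_cosets_struct:
  assumes "C \<in> even_cosets g i"
  obtains V m where "isotropic_subspace g V" "card V = 2 ^ i" "m \<in> chars g"
    "C = (\<lambda>v. cadd v m) ` V" "\<forall>c\<in>C. even_char g c"
  using assms unfolding even_cosets_def by blast

lemma even_cosetsI:
  assumes "isotropic_subspace g V" "card V = 2 ^ i" "m \<in> chars g"
    "C = (\<lambda>v. cadd v m) ` V" "\<forall>c\<in>C. even_char g c"
  shows "C \<in> even_cosets g i"
  unfolding even_cosets_def using assms by (intro CollectI exI[of _ V] exI[of _ m]) blast

lemma NI_surj:
  assumes i: "0 < i" and C': "C' \<in> even_cosets h (i - 1)"
  shows "\<exists>C\<in>NI h i. tr h ` C = C'"
proof -
  obtain V' m' where V': "isotropic_subspace h V'" "card V' = 2 ^ (i - 1)" "m' \<in> chars h"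
    "C' = (\<lambda>v. cadd v m') ` V'" "\<forall>c\<in>C'. even_char h c"
    using even_cosets_struct[OF C'] by blast
  have Vch: "V' \<subseteq> chars h" and z: "czero \<in> V'" and cl: "\<forall>a\<in>V'. \<forall>b\<in>V'. cadd a b \<in> V'"
    and eo: "\<forall>a\<in>V'. \<forall>b\<in>V'. e_one h a b"
    using V'(1) unfolding isotropic_subspace_def by blast+
  have fV': "finite V'" using V'(1) isotropic_finite by blast
  have vh: "\<not> fst v h \<and> \<not> snd v h" if "v \<in> V'" for v using Vch that chars_h by blast
  have mh: "\<not> fst m' h \<and> \<not> snd m' h" using V'(3) chars_h by blast
  define V where "V = V' \<union> cadd (zb h) ` V'"
  define C where "C = (\<lambda>v. cadd v m') ` V"
  have e1: "e_one (Suc h) a b" if "a \<in> V'" "b \<in> V'" for a b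
  proof -
    have "e_one h (tr h a) (tr h b) = e_one (Suc h) a b" by (rule e_one_tr) (use vh that in blast)+
    then show ?thesis using eo that tr_id Vch by (metis subsetD)
  qed
  have ez: "e_one (Suc h) (zb h) a" "e_one (Suc h) a (zb h)" if "a \<in> V'" for a
    using e_one_zb vh that e_one_sym by metis+
  have isoV: "isotropic_subspace (Suc h) V"
    unfolding isotropic_subspace_def
  proof (intro conjI ballI)
    show "V \<subseteq> chars (Suc h)" unfolding V_def using Vch chars_mono zb_chars chars_cadd by blast
    show "czero \<in> V" using z V_def by blast
    fix m n assume m: "m \<in> V" and n: "n \<in> V"
    obtain a where a: "a \<in> V'" "m = a \<or> m = cadd (zb h) a" using m V_def by blast
    obtain b where b: "b \<in> V'" "n = b \<or> n = cadd (zb h) b" using n V_def by blast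
    have ab: "cadd a b \<in> V'" using cl a b by blast
    from a(2) b(2) show "cadd m n \<in> V" using ab unfolding V_def
      by (elim disjE) (auto simp add: cadd_swap1 cadd_swap2[of _ "zb h"] cadd_swap3[of "zb h"])
    have f: "e_one (Suc h) a b" "e_one (Suc h) (zb h) a" "e_one (Suc h) a (zb h)"
      "e_one (Suc h) (zb h) b" "e_one (Suc h) b (zb h)"
      using e1 ez a(1) b(1) by blast+
    from a(2) b(2) show "e_one (Suc h) m n" using f by (elim disjE) (simp_all add: e_one_caddl e_one_caddr)
  qed
  have disj: "V' \<inter> cadd (zb h) ` V' = {}"
  proof -
    have "\<not> (x \<in> V' \<and> x \<in> cadd (zb h) ` V')" for x
    proof
      assume "x \<in> V' \<and> x \<in> cadd (zb h) ` V'"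
      then obtain w where w: "x \<in> V'" "w \<in> V'" "x = cadd (zb h) w" by blast
      then show False using vh[OF w(1)] vh[OF w(2)] by (simp add: cadd_snd)
    qed
    then show ?thesis by blast
  qed
  have cV: "card V = 2 ^ i"
  proof -
    have "card V = card V' + card (cadd (zb h) ` V')"
      unfolding V_def by (rule card_Un_disjoint) (use fV' disj in auto)
    moreover have "card (cadd (zb h) ` V') = card V'" by (rule card_image) (auto intro: inj_onI)
    moreover have "(2::nat) ^ i = 2 * 2 ^ (i - 1)" using i by (metis power_eq_if not_gr0)
    ultimately show ?thesis using V'(2) by simp
  qed
  have mch: "m' \<in> chars (Suc h)" using V'(3) chars_mono by blast
  have trv: "tr h v \<in> V' \<and> \<not> fst v h" if vV: "v \<in> V" for v
  proof -
    obtain a where a: "a \<in> V'" "v = a \<or> v = cadd (zb h) a" using vV V_def by blast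
    have "tr h a = a" using tr_id Vch a(1) by blast
    then show ?thesis using a vh[OF a(1)] by (auto simp: tr_cadd cadd_fst)
  qed
  have trc: "tr h c \<in> C' \<and> \<not> fst c h" if cC: "c \<in> C" for c
  proof -
    obtain v where v: "v \<in> V" "c = cadd v m'" using cC C_def by blast
    have "tr h c = cadd (tr h v) m'" using v tr_id[OF V'(3)] by (simp add: tr_cadd)
    then show ?thesis using trv[OF v(1)] v mh V'(4) by (auto simp: cadd_fst)
  qed
  have ev: "\<forall>c\<in>C. even_char (Suc h) c" using trc even_tr V'(5) by blast
  have CE: "C \<in> even_cosets (Suc h) i" using even_cosetsI[OF isoV cV mch C_def ev] .
  have CE1: "C \<in> E1 h i" unfolding E1_def using CE trc by blast
  have mC: "m' \<in> C" using co_m[of V C m'] C_def z V_def by blast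
  have zC: "cadd (zb h) m' \<in> C" using C_def V_def z by (metis UnI2 cadd_czero(1) image_eqI)
  have "\<not> inj_on (tr h) C"
  proof
    assume "inj_on (tr h) C"
    moreover have "tr h (cadd (zb h) m') = tr h m'" by (simp add: tr_cadd)
    ultimately have "cadd (zb h) m' = m'" using mC zC by (meson inj_onD)
    then show False by (metis cadd_cancel2 cadd_comm cadd_self zb_def czero_def fst_conv snd_conv)
  qed
  then have CNI: "C \<in> NI h i" using CE1 NI_def by blast
  have "tr h ` C = C'"
  proof
    show "tr h ` C \<subseteq> C'" using trc by blast
    show "C' \<subseteq> tr h ` C"
    proof
      fix x assume "x \<in> C'"
      then obtain v where v: "v \<in> V'" "x = cadd v m'" using V'(4) by blast
      then have "cadd v m' \<in> C" unfolding C_def V_def by blast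
      moreover have "tr h v = v" using tr_id Vch v(1) by blast
      then have "tr h (cadd v m') = x" using v tr_id[OF V'(3)] by (simp add: tr_cadd)
      ultimately show "x \<in> tr h ` C" by (metis image_eqI)
    qed
  qed
  then show ?thesis using CNI by blast
qed


lemma cadd_rot: "cadd (cadd v p) w = cadd (cadd v w) p"
  by (auto simp: cadd_def fun_eq_iff)

lemma setd_czero: "setd h czero False = czero"
  by (auto simp: setd_def czero_def fun_eq_iff)

lemma fiber_card:
  assumes C': "C' \<in> even_cosets h i"
  shows "card {C \<in> Inj h i. tr h ` C = C'} = 2 ^ (i + 1)"
proof -
  obtain V' p where V': "isotropic_subspace h V'" "card V' = 2 ^ i" "p \<in> chars h"
    "C' = (\<lambda>v. cadd v p) ` V'" "\<forall>c\<in>C'. even_char h c"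
    using even_cosets_struct[OF C'] by blast
  have Vch: "V' \<subseteq> chars h" and z: "czero \<in> V'" and cl: "\<forall>a\<in>V'. \<forall>b\<in>V'. cadd a b \<in> V'"
    and eo: "\<forall>a\<in>V'. \<forall>b\<in>V'. e_one h a b"
    using V'(1) unfolding isotropic_subspace_def by blast+
  have fV': "finite V'" using V'(1) isotropic_finite by blast
  have vpch: "cadd v p \<in> chars h" if "v \<in> V'" for v using Vch that V'(3) chars_cadd by blast
  define L where "L q = (\<lambda>v. setd h (cadd v p) (fst q v \<noteq> snd q)) ` V'" for q :: "(char \<Rightarrow> bool) \<times> bool"
  define T where "T = {C \<in> Inj h i. tr h ` C = C'}"
  have imgA: "L (\<phi>, b) \<in> T" if \<phi>: "\<phi> \<in> Hom V'" for \<phi> b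
  proof -
    have hom: "\<phi> (cadd v w) = (\<phi> v \<noteq> \<phi> w)" if "v \<in> V'" "w \<in> V'" for v w
      using \<phi> that unfolding Hom_def by blast
    have \<phi>0: "\<phi> czero = False" using Hom_zero[OF \<phi> z] .
    define V where "V = (\<lambda>v. setd h v (\<phi> v)) ` V'"
    define m where "m = setd h p b"
    have eqL: "L (\<phi>, b) = (\<lambda>x. cadd x m) ` V"
      unfolding L_def V_def m_def by (simp add: image_image cadd_setd)
    have isoV: "isotropic_subspace (Suc h) V"
      unfolding isotropic_subspace_def
    proof (intro conjI ballI)
      show "V \<subseteq> chars (Suc h)" unfolding V_def using Vch setd_chars by blast
      have "czero = setd h czero (\<phi> czero)" using \<phi>0 setd_czero by simp
      then show "czero \<in> V" unfolding V_def using z by blast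
      fix x y assume x: "x \<in> V" and y: "y \<in> V"
      then obtain v w where vw: "v \<in> V'" "w \<in> V'" "x = setd h v (\<phi> v)" "y = setd h w (\<phi> w)"
        unfolding V_def by blast
      have "cadd x y = setd h (cadd v w) (\<phi> (cadd v w))" using vw hom by (simp add: cadd_setd)
      then show "cadd x y \<in> V" using cl vw unfolding V_def by blast
      have tx: "tr h x = v" "tr h y = w" using vw Vch tr_setd by blast+
      have "e_one h (tr h x) (tr h y) = e_one (Suc h) x y"
      proof (rule e_one_tr)
        have "\<not> fst v h" "\<not> fst w h" using vw(1,2) Vch chars_h by blast+
        then show "\<not> snd x h \<or> \<not> fst y h" "\<not> snd y h \<or> \<not> fst x h" using vw(3,4) by simp_all
      qed
      then show "e_one (Suc h) x y" using tx eo vw by simp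
    qed
    have cV: "card V = 2 ^ i"
    proof -
      have "inj_on (\<lambda>v. setd h v (\<phi> v)) V'"
      proof (rule inj_onI)
        fix v w assume "v \<in> V'" "w \<in> V'" "setd h v (\<phi> v) = setd h w (\<phi> w)"
        then show "v = w" using tr_setd Vch by (metis subsetD)
      qed
      then show ?thesis using V'(2) unfolding V_def by (simp add: card_image)
    qed
    have mch: "m \<in> chars (Suc h)" unfolding m_def using setd_chars V'(3) by blast
    have elt: "\<not> fst n h \<and> tr h n \<in> C' \<and> even_char (Suc h) n" if n: "n \<in> L (\<phi>, b)" for n
    proof -
      obtain v where v: "v \<in> V'" "n = setd h (cadd v p) (\<phi> v \<noteq> b)" using n unfolding L_def by auto
      have tn: "tr h n = cadd v p" using tr_setd vpch[OF v(1)] v(2) by blast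
      have c: "cadd v p \<in> C'" using V'(4) v(1) by blast
      have fn: "\<not> fst n h" using v(2) vpch[OF v(1)] chars_h by simp
      show ?thesis using fn tn c even_tr[OF fn] V'(5) by simp
    qed
    have CE: "L (\<phi>, b) \<in> even_cosets (Suc h) i"
      using even_cosetsI[OF isoV cV mch eqL] elt by blast
    have injL: "inj_on (tr h) (L (\<phi>, b))"
    proof (rule inj_onI)
      fix x y assume x: "x \<in> L (\<phi>, b)" and y: "y \<in> L (\<phi>, b)" and e: "tr h x = tr h y"
      obtain v where v: "v \<in> V'" "x = setd h (cadd v p) (\<phi> v \<noteq> b)" using x unfolding L_def by auto
      obtain w where w: "w \<in> V'" "y = setd h (cadd w p) (\<phi> w \<noteq> b)" using y unfolding L_def by auto
      have "cadd v p = cadd w p" using e v w tr_setd vpch by metis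
      then have "v = w" by simp
      then show "x = y" using v w by simp
    qed
    have trL: "tr h ` L (\<phi>, b) = C'"
    proof -
      have "tr h ` L (\<phi>, b) = (\<lambda>v. tr h (setd h (cadd v p) (\<phi> v \<noteq> b))) ` V'"
        unfolding L_def by (simp add: image_image)
      also have "\<dots> = (\<lambda>v. cadd v p) ` V'" using tr_setd vpch by (intro image_cong) auto
      finally show ?thesis using V'(4) by simp
    qed
    show ?thesis unfolding T_def Inj_def E1_def using CE elt injL trL by blast
  qed
  have injA: "inj_on L (Hom V' \<times> UNIV)"
  proof (rule inj_onI)
    fix q1 q2 assume q1: "q1 \<in> Hom V' \<times> UNIV" and q2: "q2 \<in> Hom V' \<times> UNIV" and e: "L q1 = L q2"
    obtain \<phi> b where qb1: "q1 = (\<phi>, b)" "\<phi> \<in> Hom V'" using q1 by (cases q1) auto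
    obtain \<psi> c where qb2: "q2 = (\<psi>, c)" "\<psi> \<in> Hom V'" using q2 by (cases q2) auto
    have key: "(\<phi> v \<noteq> b) = (\<psi> v \<noteq> c)" if v: "v \<in> V'" for v
    proof -
      have "setd h (cadd v p) (\<phi> v \<noteq> b) \<in> L q2" using e v unfolding qb1 L_def by auto
      then obtain w where w: "w \<in> V'" "setd h (cadd v p) (\<phi> v \<noteq> b) = setd h (cadd w p) (\<psi> w \<noteq> c)"
        unfolding qb2 L_def by auto
      have "cadd v p = cadd w p" using arg_cong[OF w(2), of "tr h"] tr_setd vpch v w(1) by metis
      then have "v = w" by simp
      then show ?thesis using arg_cong[OF w(2), of "\<lambda>x. snd x h"] by simp
    qed
    have bc: "b = c" using key[OF z] Hom_zero[OF qb1(2) z] Hom_zero[OF qb2(2) z] by simp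
    have "\<phi> x = \<psi> x" for x
    proof (cases "x \<in> V'")
      case True then show ?thesis using key[OF True] bc by argo
    next
      case False then show ?thesis using qb1(2) qb2(2) unfolding Hom_def by blast
    qed
    then show "q1 = q2" using qb1 qb2 bc by auto
  qed
  have surj: "T \<subseteq> L ` (Hom V' \<times> UNIV)"
  proof
    fix C assume CT: "C \<in> T"
    then have inj: "inj_on (tr h) C" and E: "C \<in> E1 h i" and trC: "tr h ` C = C'"
      unfolding T_def Inj_def by blast+
    obtain V m where V: "isotropic_subspace (Suc h) V" "card V = 2 ^ i" "m \<in> chars (Suc h)"
      "C = (\<lambda>v. cadd v m) ` V" "\<forall>c\<in>C. even_char (Suc h) c" "\<forall>v\<in>V. \<not> fst v h" "\<not> fst m h"
      "\<forall>c\<in>C. \<not> fst c h" using E1_struct[OF E] by blast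
    have clV: "\<forall>a\<in>V. \<forall>b\<in>V. cadd a b \<in> V" using V(1) unfolding isotropic_subspace_def by blast
    define nx where "nx x = inv_into C (tr h) x" for x
    have nxC: "nx x \<in> C \<and> tr h (nx x) = x" if "x \<in> C'" for x
      using that trC unfolding nx_def by (metis inv_into_into f_inv_into_f)
    have nxtr: "nx (tr h n) = n" if "n \<in> C" for n
      using inj that unfolding nx_def by (simp add: inv_into_f_f)
    define b where "b = snd (nx p) h"
    define \<phi> where "\<phi> v = (if v \<in> V' then (snd (nx (cadd v p)) h \<noteq> b) else False)" for v
    have pC': "p \<in> C'" using V'(4) z by (metis cadd_czero(2) image_eqI)
    have vC': "cadd v p \<in> C'" if "v \<in> V'" for v using V'(4) that by blast
    have \<phi>H: "\<phi> \<in> Hom V'"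
      unfolding Hom_def
    proof (intro CollectI conjI ballI allI impI)
      fix x assume "x \<notin> V'" then show "\<phi> x = False" by (simp add: \<phi>_def)
    next
      fix v w assume v: "v \<in> V'" and w: "w \<in> V'"
      have vw: "cadd v w \<in> V'" using cl v w by blast
      define a1 where "a1 = nx (cadd v p)"
      define a2 where "a2 = nx (cadd w p)"
      define a3 where "a3 = nx p"
      have a: "a1 \<in> C" "a2 \<in> C" "a3 \<in> C" "tr h a1 = cadd v p" "tr h a2 = cadd w p" "tr h a3 = p"
        using nxC vC' v w pC' unfolding a1_def a2_def a3_def by blast+
      define q where "q = cadd a1 (cadd a2 a3)"
      have qC: "q \<in> C" unfolding q_def using co_triple[OF clV V(4) a(1,2,3)] .
      have "tr h q = cadd (cadd v w) p" unfolding q_def using a(4,5,6) by (simp add: tr_cadd cadd_rot)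
      then have nq: "nx (cadd (cadd v w) p) = q" using nxtr[OF qC] by simp
      have sq: "snd q h = (snd a1 h \<noteq> (snd a2 h \<noteq> snd a3 h))" unfolding q_def by (simp add: cadd_snd)
      have p1: "\<phi> (cadd v w) = (snd q h \<noteq> b)" using vw nq by (simp add: \<phi>_def)
      have p2: "\<phi> v = (snd a1 h \<noteq> b)" using v by (simp add: \<phi>_def a1_def)
      have p3: "\<phi> w = (snd a2 h \<noteq> b)" using w by (simp add: \<phi>_def a2_def)
      have p4: "b = snd a3 h" by (simp add: b_def a3_def)
      show "\<phi> (cadd v w) = (\<phi> v \<noteq> \<phi> w)" using p1 p2 p3 p4 sq by argo
    qed
    have "C = L (\<phi>, b)"
    proof
      show "C \<subseteq> L (\<phi>, b)"
      proof
        fix n assume n: "n \<in> C"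
        have "tr h n \<in> C'" using trC n by blast
        then obtain v where v: "v \<in> V'" "tr h n = cadd v p" using V'(4) by blast
        have nn: "nx (cadd v p) = n" using nxtr[OF n] v(2) by simp
        have fn: "\<not> fst n h" using V(8) n by blast
        have ph: "\<phi> v = (snd n h \<noteq> b)" using v nn by (simp add: \<phi>_def)
        have "(\<phi> v \<noteq> b) = snd n h" using ph by argo
        then have "setd h (cadd v p) (\<phi> v \<noteq> b) = setd h (tr h n) (snd n h)"
          using v by simp
        also have "\<dots> = n" using setd_tr[OF fn] .
        finally show "n \<in> L (\<phi>, b)" unfolding L_def using v(1) by force
      qed
      show "L (\<phi>, b) \<subseteq> C"
      proof
        fix x assume "x \<in> L (\<phi>, b)"
        then obtain v where v: "v \<in> V'" "x = setd h (cadd v p) (\<phi> v \<noteq> b)" unfolding L_def by auto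
        define a where "a = nx (cadd v p)"
        have a: "a \<in> C" "tr h a = cadd v p" using nxC[OF vC'[OF v(1)]] unfolding a_def by blast+
        have fa: "\<not> fst a h" using V(8) a(1) by blast
        have ph: "\<phi> v = (snd a h \<noteq> b)" using v by (simp add: \<phi>_def a_def)
        have "(\<phi> v \<noteq> b) = snd a h" using ph by argo
        then have "x = setd h (tr h a) (snd a h)" using v a(2) by simp
        then show "x \<in> C" using setd_tr[OF fa] a(1) by simp
      qed
    qed
    then show "C \<in> L ` (Hom V' \<times> UNIV)" using \<phi>H by blast
  qed
  have "L ` (Hom V' \<times> UNIV) = T" using surj imgA by auto
  then have "bij_betw L (Hom V' \<times> UNIV) T" using injA by (simp add: bij_betw_def)
  then have "card T = card (Hom V' \<times> (UNIV :: bool set))" by (simp add: bij_betw_same_card)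
  also have "\<dots> = card V' * 2" using card_Hom[OF fV' z cl] by (simp add: card_cartesian_product)
  finally show ?thesis using V'(2) unfolding T_def by simp
qed


lemma comb:
  fixes f :: "char \<Rightarrow> complex"
  assumes s: "0 < s"
  shows "(\<Sum>C\<in>even_cosets (Suc h) i. (\<Prod>n\<in>C. if fst n h then 0 else f (tr h n)) ^ s)
       = 2 ^ (i + 1) * (\<Sum>C\<in>even_cosets h i. (\<Prod>n\<in>C. f n) ^ s)
         + (if i = 0 then 0 else (\<Sum>C\<in>even_cosets h (i - 1). (\<Prod>n\<in>C. f n) ^ (2 * s)))"
proof -
  define E where "E = even_cosets (Suc h) i"
  define G where "G C = (\<Prod>n\<in>C. f (tr h n)) ^ s" for C
  have fE: "finite E" unfolding E_def by (rule finite_even_cosets)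
  have E1E: "E1 h i \<subseteq> E" unfolding E1_def E_def by blast
  have fE1: "finite (E1 h i)" using fE E1E finite_subset by blast
  have step1: "(\<Sum>C\<in>E. (\<Prod>n\<in>C. if fst n h then 0 else f (tr h n)) ^ s) = (\<Sum>C\<in>E1 h i. G C)"
  proof (rule sum.mono_neutral_cong_right[OF fE E1E])
    show "\<forall>C\<in>E - E1 h i. (\<Prod>n\<in>C. if fst n h then 0 else f (tr h n)) ^ s = 0"
    proof
      fix C assume C: "C \<in> E - E1 h i"
      then have CE: "C \<in> even_cosets (Suc h) i" and ex: "\<exists>n\<in>C. fst n h"
        unfolding E_def E1_def by blast+
      have "(\<Prod>n\<in>C. if fst n h then 0 else f (tr h n)) = 0"
        using ex even_cosets_finite_C[OF CE] by (intro prod_zero) auto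
      then show "(\<Prod>n\<in>C. if fst n h then 0 else f (tr h n)) ^ s = 0" using s by simp
    qed
    fix C assume C: "C \<in> E1 h i"
    then have nf: "\<forall>n\<in>C. \<not> fst n h" unfolding E1_def by blast
    have "(\<Prod>n\<in>C. if fst n h then 0 else f (tr h n)) = (\<Prod>n\<in>C. f (tr h n))"
      by (rule prod.cong) (use nf in auto)
    then show "(\<Prod>n\<in>C. if fst n h then 0 else f (tr h n)) ^ s = G C"
      unfolding G_def by simp
  qed
  have split: "E1 h i = Inj h i \<union> NI h i" "Inj h i \<inter> NI h i = {}" unfolding Inj_def NI_def by blast+
  have fI: "finite (Inj h i)" "finite (NI h i)" using fE1 split(1) by (metis finite_Un)+
  have step2: "(\<Sum>C\<in>E1 h i. G C) = (\<Sum>C\<in>Inj h i. G C) + (\<Sum>C\<in>NI h i. G C)"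
    using split fI by (simp add: sum.union_disjoint)
  define P where "P C = (\<Prod>n\<in>C. f n)" for C
  have step3: "(\<Sum>C\<in>Inj h i. G C) = 2 ^ (i + 1) * (\<Sum>C\<in>even_cosets h i. P C ^ s)"
  proof -
    have "(\<Sum>C\<in>Inj h i. G C) = (\<Sum>C\<in>Inj h i. P (tr h ` C) ^ s)"
    proof (rule sum.cong)
      fix C assume "C \<in> Inj h i"
      then have "inj_on (tr h) C" unfolding Inj_def by blast
      then show "G C = P (tr h ` C) ^ s" unfolding G_def P_def by (simp add: prod.reindex)
    qed simp
    also have "\<dots> = (\<Sum>C'\<in>even_cosets h i. \<Sum>C\<in>{C \<in> Inj h i. tr h ` C = C'}. P (tr h ` C) ^ s)"
      by (rule sum.group[symmetric]) (use fI(1) finite_even_cosets Inj_img in auto)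
    also have "\<dots> = (\<Sum>C'\<in>even_cosets h i. of_nat (card {C \<in> Inj h i. tr h ` C = C'}) * P C' ^ s)"
    proof (rule sum.cong)
      fix C' assume "C' \<in> even_cosets h i"
      have "(\<Sum>C\<in>{C \<in> Inj h i. tr h ` C = C'}. P (tr h ` C) ^ s) = (\<Sum>C\<in>{C \<in> Inj h i. tr h ` C = C'}. P C' ^ s)"
        by (rule sum.cong) auto
      then show "(\<Sum>C\<in>{C \<in> Inj h i. tr h ` C = C'}. P (tr h ` C) ^ s) = of_nat (card {C \<in> Inj h i. tr h ` C = C'}) * P C' ^ s"
        by simp
    qed simp
    also have "\<dots> = (\<Sum>C'\<in>even_cosets h i. 2 ^ (i + 1) * P C' ^ s)"
      by (rule sum.cong) (simp_all add: fiber_card)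
    finally show ?thesis by (simp add: sum_distrib_left)
  qed
  have step4: "(\<Sum>C\<in>NI h i. G C) = (if i = 0 then 0 else (\<Sum>C\<in>even_cosets h (i - 1). P C ^ (2 * s)))"
  proof (cases "i = 0")
    case True
    then have "NI h i = {}" using NI_facts(1) by blast
    then show ?thesis using True by simp
  next
    case False
    have img: "(\<lambda>C. tr h ` C) ` NI h i = even_cosets h (i - 1)"
    proof
      show "(\<lambda>C. tr h ` C) ` NI h i \<subseteq> even_cosets h (i - 1)" using NI_facts(2) by blast
      show "even_cosets h (i - 1) \<subseteq> (\<lambda>C. tr h ` C) ` NI h i"
      proof
        fix C' assume C': "C' \<in> even_cosets h (i - 1)"
        have "0 < i" using False by simp
        from NI_surj[OF this C'] obtain C where "C \<in> NI h i" "tr h ` C = C'" by blast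
        then show "C' \<in> (\<lambda>C. tr h ` C) ` NI h i" by blast
      qed
    qed
    have "(\<Sum>C\<in>NI h i. G C) = (\<Sum>C\<in>NI h i. P (tr h ` C) ^ (2 * s))"
    proof (rule sum.cong)
      fix C assume C: "C \<in> NI h i"
      show "G C = P (tr h ` C) ^ (2 * s)" unfolding G_def P_def using NI_prod[OF C, of f] by (simp add: power_mult)
    qed simp
    also have "\<dots> = (\<Sum>C\<in>(\<lambda>C. tr h ` C) ` NI h i. P C ^ (2 * s))"
      by (simp add: sum.reindex[OF NI_inj] o_def)
    finally show ?thesis using img False by simp
  qed
  show ?thesis using step1 step2 step3 step4 unfolding E_def P_def by simp
qed


lemma infsum_product_unc:
  fixes f :: "'a \<Rightarrow> complex" and g :: "'b \<Rightarrow> complex"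
  shows "infsum (\<lambda>(a,b). f a * g b) (A \<times> B) = infsum f A * infsum g B"
proof (cases "f summable_on A \<and> g summable_on B")
  case True
  then have af: "(\<lambda>x. norm (f x)) summable_on A" and ag: "(\<lambda>x. norm (g x)) summable_on B"
    using summable_on_iff_abs_summable_on_complex by blast+
  have "(\<lambda>p. norm ((\<lambda>(a,b). f a * g b) p)) summable_on A \<times> B"
  proof -
    have "(\<lambda>p. norm ((\<lambda>(a,b). f a * g b) p)) = (\<lambda>(a,b). norm (f a) * norm (g b))"
      by (auto simp: norm_mult)
    moreover have "(\<lambda>p. norm ((\<lambda>(a,b). norm (f a) * norm (g b)) p)) summable_on Sigma A (\<lambda>_. B)"
    proof (rule Infinite_Sum.abs_summable_on_Sigma_iff[where f="\<lambda>(a,b). norm (f a) * norm (g b)" and A=A and B="\<lambda>_. B", THEN iffD2], intro conjI ballI)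
      fix x assume "x \<in> A"
      show "(\<lambda>y. norm ((\<lambda>(a,b). norm (f a) * norm (g b)) (x, y))) summable_on B"
        using summable_on_cmult_right[OF ag, of "norm (f x)"] by simp
    next
      have eq: "(\<Sum>\<^sub>\<infinity>y\<in>B. norm ((\<lambda>(a,b). norm (f a) * norm (g b)) (x, y)))
          = norm (f x) * (\<Sum>\<^sub>\<infinity>y\<in>B. norm (g y))" for x
        by (simp add: infsum_cmult_right')
      have "(\<lambda>x. norm (norm (f x) * (\<Sum>\<^sub>\<infinity>y\<in>B. norm (g y)))) summable_on A"
      proof -
        have nn: "0 \<le> (\<Sum>\<^sub>\<infinity>y\<in>B. norm (g y))" by (rule infsum_nonneg) simp
        show ?thesis using summable_on_cmult_left[OF af, of "norm (\<Sum>\<^sub>\<infinity>y\<in>B. norm (g y))"] nn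
          by (simp add: abs_mult)
      qed
      then show "(\<lambda>x. norm (\<Sum>\<^sub>\<infinity>y\<in>B. norm ((\<lambda>(a,b). norm (f a) * norm (g b)) (x, y)))) summable_on A"
        unfolding eq .
    qed
    ultimately show ?thesis by (simp add: case_prod_unfold)
  qed
  then have S: "(\<lambda>(a,b). f a * g b) summable_on A \<times> B"
    using summable_on_iff_abs_summable_on_complex by blast
  have "infsum (\<lambda>(a,b). f a * g b) (A \<times> B) = infsum (\<lambda>x. infsum (\<lambda>y. f x * g y) B) A"
    using infsum_Sigma_banach[OF S] by simp
  also have "\<dots> = infsum (\<lambda>x. f x * infsum g B) A" by (simp add: infsum_cmult_right')
  also have "\<dots> = infsum f A * infsum g B" by (simp add: infsum_cmult_left')
  finally show ?thesis .
next
  case False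
  have ns: "\<not> (\<lambda>(a,b). f a * g b) summable_on A \<times> B" if nz: "\<exists>a\<in>A. f a \<noteq> 0" "\<exists>b\<in>B. g b \<noteq> 0"
  proof
    assume S: "(\<lambda>(a,b). f a * g b) summable_on A \<times> B"
    from nz obtain a0 b0 where ab: "a0 \<in> A" "f a0 \<noteq> 0" "b0 \<in> B" "g b0 \<noteq> 0" by blast
    have "(\<lambda>(a,b). f a * g b) summable_on (\<lambda>a. (a, b0)) ` A"
      by (rule summable_on_subset_banach[OF S]) (use ab in auto)
    then have "(\<lambda>a. f a * g b0) summable_on A"
      by (subst (asm) summable_on_reindex) (auto intro: inj_onI simp: o_def)
    then have fA: "f summable_on A" using summable_on_cmult_left'[OF ab(4)] by blast
    have "(\<lambda>(a,b). f a * g b) summable_on (\<lambda>b. (a0, b)) ` B"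
      by (rule summable_on_subset_banach[OF S]) (use ab in auto)
    then have "(\<lambda>b. f a0 * g b) summable_on B"
      by (subst (asm) summable_on_reindex) (auto intro: inj_onI simp: o_def)
    then have gB: "g summable_on B" using summable_on_cmult_right'[OF ab(2)] by blast
    show False using False fA gB by blast
  qed
  show ?thesis
  proof (cases "(\<exists>a\<in>A. f a \<noteq> 0) \<and> (\<exists>b\<in>B. g b \<noteq> 0)")
    case True
    then have "infsum (\<lambda>(a,b). f a * g b) (A \<times> B) = 0" using ns by (simp add: infsum_not_exists)
    moreover have "infsum f A * infsum g B = 0" using False by (auto simp: infsum_not_exists)
    ultimately show ?thesis by simp
  next
    case nz: False
    then have "(\<forall>a\<in>A. f a = 0) \<or> (\<forall>b\<in>B. g b = 0)" by blast
    then show ?thesis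
    proof
      assume z: "\<forall>a\<in>A. f a = 0"
      then have "infsum f A = 0" by (simp add: infsum_0)
      moreover have "infsum (\<lambda>(a,b). f a * g b) (A \<times> B) = 0" using z by (intro infsum_0) auto
      ultimately show ?thesis by simp
    next
      assume z: "\<forall>b\<in>B. g b = 0"
      then have "infsum g B = 0" by (simp add: infsum_0)
      moreover have "infsum (\<lambda>(a,b). f a * g b) (A \<times> B) = 0" using z by (intro infsum_0) auto
      ultimately show ?thesis by simp
    qed
  qed
qed

lemma summable_exp_abs_int: "(\<lambda>k::int. exp (- real_of_int \<bar>k\<bar>)) summable_on UNIV"
proof -
  have geo: "(\<lambda>n::nat. exp (- real n)) summable_on UNIV"
  proof (rule summable_nonneg_imp_summable_on)
    have "(\<lambda>n::nat. exp (- real n)) = (\<lambda>n. exp (-1) ^ n)"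
      by (rule ext) (metis exp_of_nat_mult mult_minus1_right mult.commute)
    moreover have "summable (\<lambda>n::nat. exp (-1::real) ^ n)" by (rule summable_geometric) simp
    ultimately show "summable (\<lambda>n::nat. exp (- real n))" by simp
  qed simp
  have A: "(\<lambda>k::int. exp (- real_of_int \<bar>k\<bar>)) summable_on range int"
    using geo by (subst summable_on_reindex) (auto simp: o_def)
  have B: "(\<lambda>k::int. exp (- real_of_int \<bar>k\<bar>)) summable_on range (\<lambda>n. - int n)"
    using geo by (subst summable_on_reindex) (auto simp: o_def intro: inj_onI)
  have "UNIV = range int \<union> range (\<lambda>n. - int n)"
  proof -
    have "x \<in> range int \<union> range (\<lambda>n. - int n)" for x :: int
    proof (cases "0 \<le> x")
      case True then show ?thesis by (metis UnI1 nonneg_int_cases rangeI)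
    next
      case False then have "x = - int (nat (- x))" by simp
      then show ?thesis by blast
    qed
    then show ?thesis by blast
  qed
  then show ?thesis using summable_on_union[OF A B] by simp
qed


definition F1 :: "bool \<Rightarrow> bool \<Rightarrow> real \<Rightarrow> int \<Rightarrow> complex" where
  "F1 e d t k = (let y = real_of_int k + (if e then 1/2 else 0) in
     exp (complex_of_real pi * \<i> * (complex_of_real y * (\<i> * complex_of_real t) * complex_of_real y
        + complex_of_real (y * (if d then 1 else 0)))))"

definition th1 :: "bool \<Rightarrow> bool \<Rightarrow> real \<Rightarrow> complex" where
  "th1 e d t = infsum (F1 e d t) UNIV"

lemma norm_F1: "norm (F1 e d t k) = exp (- (pi * t * (real_of_int k + (if e then 1/2 else 0))^2))"
proof -
  define y where "y = real_of_int k + (if e then 1/2 else 0)"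
  have "complex_of_real pi * \<i> * (complex_of_real y * (\<i> * complex_of_real t) * complex_of_real y
        + complex_of_real (y * (if d then 1 else 0)))
      = complex_of_real (- (pi * t * y^2)) + \<i> * complex_of_real (pi * y * (if d then 1 else 0))"
    by (simp add: algebra_simps power2_eq_square)
  then have "norm (F1 e d t k) = norm (exp (complex_of_real (- (pi * t * y^2)) + \<i> * complex_of_real (pi * y * (if d then 1 else 0))))"
    unfolding F1_def y_def[symmetric] Let_def by metis
  also have "\<dots> = exp (- (pi * t * y^2))" by (simp add: norm_exp_eq_Re)
  finally show ?thesis by (simp add: y_def)
qed

lemma F1_zero: "F1 False d t 0 = 1"
  by (simp add: F1_def)

lemma bound_F1_0:
  assumes t: "1 \<le> t" and k: "k \<noteq> 0"
  shows "norm (F1 False d t k) \<le> exp (1 - t) * exp (- real_of_int \<bar>k\<bar>)"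
proof -
  define r where "r = real_of_int \<bar>k\<bar>"
  have r1: "1 \<le> r" using k by (simp add: r_def)
  have kr: "(real_of_int k)^2 = r^2" by (simp add: r_def)
  have "r \<le> r^2" using r1 by (simp add: power2_eq_square)
  have r2: "1 \<le> r^2" using r1 by (simp add: one_le_power)
  have "1 * (r^2 - 1) \<le> t * (r^2 - 1)" using t r2 by (intro mult_right_mono) auto
  have "t * r^2 \<le> pi * t * r^2"
    using t pi_gt3 by (intro mult_right_mono) (auto simp: mult_right_mono)
  have main: "t + r - 1 \<le> pi * t * r^2"
    using \<open>r \<le> r^2\<close> \<open>1 * (r^2 - 1) \<le> t * (r^2 - 1)\<close> \<open>t * r^2 \<le> pi * t * r^2\<close> by (simp add: algebra_simps)
  have "norm (F1 False d t k) = exp (- (pi * t * r^2))" by (simp add: norm_F1 kr)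
  also have "\<dots> \<le> exp (1 - t - r)" using main by simp
  also have "\<dots> = exp (1 - t) * exp (- r)" by (simp add: exp_add[symmetric])
  finally show ?thesis by (simp add: r_def)
qed

lemma bound_F1_1:
  assumes t: "1 \<le> t"
  shows "norm (F1 True d t k) \<le> exp (1 - t / 4) * exp (- real_of_int \<bar>k\<bar>)"
proof -
  define y where "y = real_of_int k + 1/2"
  define r where "r = real_of_int \<bar>k\<bar>"
  have ya: "r - 1/2 \<le> \<bar>y\<bar>" unfolding y_def r_def by linarith
  have y2: "1/4 \<le> y^2"
  proof -
    have "1/2 \<le> \<bar>y\<bar>" unfolding y_def by (cases "0 \<le> k") linarith+
    then have "(1/2)^2 \<le> \<bar>y\<bar>^2" by (intro power_mono) auto
    then show ?thesis by (simp add: power_divide)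
  qed
  have sq: "0 \<le> (\<bar>y\<bar> - 1/2)^2" by simp
  then have a1: "\<bar>y\<bar> - 1/2 \<le> y^2 - 1/4" by (simp add: power2_eq_square algebra_simps)
  have a2: "1 * (y^2 - 1/4) \<le> t * (y^2 - 1/4)" using t y2 by (intro mult_right_mono) auto
  have a3: "t * y^2 \<le> pi * t * y^2" using t pi_gt3 by (intro mult_right_mono) auto
  have main: "t / 4 + r - 1 \<le> pi * t * y^2"
    using ya a1 a2 a3 by (simp add: algebra_simps)
  have "norm (F1 True d t k) = exp (- (pi * t * y^2))" by (simp add: norm_F1 y_def)
  also have "\<dots> \<le> exp (1 - t / 4 - r)" using main by simp
  also have "\<dots> = exp (1 - t / 4) * exp (- r)" by (simp add: exp_add[symmetric])
  finally show ?thesis by (simp add: r_def)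
qed

lemma bound_F1:
  assumes t: "1 \<le> t"
  shows "norm (F1 e d t k) \<le> exp 1 * exp (- real_of_int \<bar>k\<bar>)"
proof (cases e)
  case True
  have "norm (F1 e d t k) \<le> exp (1 - t / 4) * exp (- real_of_int \<bar>k\<bar>)" using bound_F1_1[OF t, of d k] True by simp
  also have "\<dots> \<le> exp 1 * exp (- real_of_int \<bar>k\<bar>)" by (rule mult_right_mono) (use t in auto)
  finally show ?thesis .
next
  case False
  show ?thesis
  proof (cases "k = 0")
    case True then show ?thesis using False by (simp add: F1_zero)
  next
    case k: False
    have "norm (F1 e d t k) \<le> exp (1 - t) * exp (- real_of_int \<bar>k\<bar>)" using bound_F1_0[OF t k, of d] False by simp
    also have "\<dots> \<le> exp 1 * exp (- real_of_int \<bar>k\<bar>)" by (rule mult_right_mono) (use t in auto)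
    finally show ?thesis .
  qed
qed

lemma F1_summable: "1 \<le> t \<Longrightarrow> F1 e d t summable_on A"
proof -
  assume t: "1 \<le> t"
  have "(\<lambda>k. exp 1 * exp (- real_of_int \<bar>k\<bar>)) summable_on UNIV"
    using summable_on_cmult_right[OF summable_exp_abs_int] by simp
  then have "(\<lambda>k. norm (F1 e d t k)) summable_on UNIV"
    by (rule summable_on_comparison_test) (use bound_F1[OF t] in auto)
  then have "F1 e d t summable_on UNIV" using summable_on_iff_abs_summable_on_complex by blast
  then show ?thesis by (rule summable_on_subset_banach) simp
qed

lemma th1_lim0: "((\<lambda>t. th1 False d t) \<longlongrightarrow> 1) at_top"
proof -
  define M where "M = infsum (\<lambda>k::int. exp (- real_of_int \<bar>k\<bar>)) (UNIV - {0})"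
  have sM: "(\<lambda>k::int. exp (- real_of_int \<bar>k\<bar>)) summable_on (UNIV - {0})"
    by (rule summable_on_subset_banach[OF summable_exp_abs_int]) simp
  have bd: "norm (th1 False d t - 1) \<le> exp (1 - t) * M" if t: "1 \<le> t" for t
  proof -
    have s: "F1 False d t summable_on (UNIV - {0})" using F1_summable[OF t] .
    have "th1 False d t = infsum (F1 False d t) (insert 0 (UNIV - {0}))"
      by (simp add: th1_def insert_absorb)
    also have "\<dots> = 1 + infsum (F1 False d t) (UNIV - {0})"
      using infsum_insert[OF s] by (simp add: F1_zero)
    finally have e: "th1 False d t - 1 = infsum (F1 False d t) (UNIV - {0})" by simp
    have "norm (infsum (F1 False d t) (UNIV - {0})) \<le> exp (1 - t) * M"
    proof (rule norm_infsum_le)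
      show "(F1 False d t has_sum infsum (F1 False d t) (UNIV - {0})) (UNIV - {0})" using s by simp
      show "((\<lambda>k. exp (1 - t) * exp (- real_of_int \<bar>k\<bar>)) has_sum exp (1 - t) * M) (UNIV - {0})"
        unfolding M_def by (rule has_sum_cmult_right) (use sM in simp)
      fix k :: int assume "k \<in> UNIV - {0}"
      then show "norm (F1 False d t k) \<le> exp (1 - t) * exp (- real_of_int \<bar>k\<bar>)"
        using bound_F1_0[OF t] by simp
    qed
    then show ?thesis using e by simp
  qed
  have "((\<lambda>t. exp (1 - t) * M) \<longlongrightarrow> 0) at_top"
  proof -
    have "((\<lambda>t::real. exp (1 - t)) \<longlongrightarrow> 0) at_top" by real_asymp
    then show ?thesis by (rule tendsto_mult_left_zero)
  qed
  moreover have "eventually (\<lambda>t. norm (th1 False d t - 1) \<le> exp (1 - t) * M) at_top"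
    by (rule eventually_mono[OF eventually_ge_at_top[of "1::real"]]) (rule bd)
  ultimately have "((\<lambda>t. th1 False d t - 1) \<longlongrightarrow> 0) at_top"
    by (rule Lim_null_comparison[rotated])
  then show ?thesis by (simp add: LIM_zero_iff)
qed

lemma th1_lim1: "((\<lambda>t. th1 True d t) \<longlongrightarrow> 0) at_top"
proof -
  define M where "M = infsum (\<lambda>k::int. exp (- real_of_int \<bar>k\<bar>)) UNIV"
  have bd: "norm (th1 True d t) \<le> exp (1 - t / 4) * M" if t: "1 \<le> t" for t
    unfolding th1_def
  proof (rule norm_infsum_le)
    show "(F1 True d t has_sum infsum (F1 True d t) UNIV) UNIV" using F1_summable[OF t] by simp
    show "((\<lambda>k. exp (1 - t / 4) * exp (- real_of_int \<bar>k\<bar>)) has_sum exp (1 - t / 4) * M) UNIV"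
      unfolding M_def by (rule has_sum_cmult_right) (use summable_exp_abs_int in simp)
    fix k :: int
    show "norm (F1 True d t k) \<le> exp (1 - t / 4) * exp (- real_of_int \<bar>k\<bar>)" using bound_F1_1[OF t] .
  qed
  have "((\<lambda>t. exp (1 - t / 4) * M) \<longlongrightarrow> 0) at_top"
  proof -
    have "((\<lambda>t::real. exp (1 - t / 4)) \<longlongrightarrow> 0) at_top" by real_asymp
    then show ?thesis by (rule tendsto_mult_left_zero)
  qed
  moreover have "eventually (\<lambda>t. norm (th1 True d t) \<le> exp (1 - t / 4) * M) at_top"
    by (rule eventually_mono[OF eventually_ge_at_top[of "1::real"]]) (rule bd)
  ultimately show ?thesis by (rule Lim_null_comparison[rotated])
qed


lemma blk_quad:
  fixes X :: "nat \<Rightarrow> complex"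
  shows "(\<Sum>j<Suc h. \<Sum>l<Suc h. X j * blk (Suc h) \<tau>1 t j l * X l)
       = (\<Sum>j<h. \<Sum>l<h. X j * \<tau>1 j l * X l) + X h * (\<i> * complex_of_real t) * X h"
proof -
  have inner: "(\<Sum>l<Suc h. X j * blk (Suc h) \<tau>1 t j l * X l) = (\<Sum>l<h. X j * \<tau>1 j l * X l)" if "j < h" for j
  proof -
    have "(\<Sum>l<Suc h. X j * blk (Suc h) \<tau>1 t j l * X l) = (\<Sum>l<h. X j * blk (Suc h) \<tau>1 t j l * X l) + X j * blk (Suc h) \<tau>1 t j h * X h"
      by simp
    also have "blk (Suc h) \<tau>1 t j h = 0" using that by (simp add: blk_def)
    also have "(\<Sum>l<h. X j * blk (Suc h) \<tau>1 t j l * X l) = (\<Sum>l<h. X j * \<tau>1 j l * X l)"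
      by (rule sum.cong) (use that in \<open>simp_all add: blk_def\<close>)
    finally show ?thesis by simp
  qed
  have innerh: "(\<Sum>l<Suc h. X h * blk (Suc h) \<tau>1 t h l * X l) = X h * (\<i> * complex_of_real t) * X h"
  proof -
    have "(\<Sum>l<Suc h. X h * blk (Suc h) \<tau>1 t h l * X l) = (\<Sum>l<h. X h * blk (Suc h) \<tau>1 t h l * X l) + X h * blk (Suc h) \<tau>1 t h h * X h"
      by simp
    also have "(\<Sum>l<h. X h * blk (Suc h) \<tau>1 t h l * X l) = 0"
      by (rule sum.neutral) (simp add: blk_def)
    also have "blk (Suc h) \<tau>1 t h h = \<i> * complex_of_real t" by (simp add: blk_def)
    finally show ?thesis by simp
  qed
  have "(\<Sum>j<Suc h. \<Sum>l<Suc h. X j * blk (Suc h) \<tau>1 t j l * X l)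
      = (\<Sum>j<h. \<Sum>l<Suc h. X j * blk (Suc h) \<tau>1 t j l * X l) + (\<Sum>l<Suc h. X h * blk (Suc h) \<tau>1 t h l * X l)"
    by simp
  also have "(\<Sum>j<h. \<Sum>l<Suc h. X j * blk (Suc h) \<tau>1 t j l * X l) = (\<Sum>j<h. \<Sum>l<h. X j * \<tau>1 j l * X l)"
    by (rule sum.cong[OF refl]) (rule inner, simp)
  finally show ?thesis using innerh by simp
qed

definition tsum :: "nat \<Rightarrow> char \<Rightarrow> cmat \<Rightarrow> (nat \<Rightarrow> int) \<Rightarrow> complex" where
  "tsum g m \<tau> n = (let x = (\<lambda>j. of_int (n j) + (if fst m j then 1/2 else 0) :: real) in
      exp (complex_of_real pi * \<i> *
        ((\<Sum>j<g. \<Sum>k<g. complex_of_real (x j) * \<tau> j k * complex_of_real (x k))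
         + (\<Sum>j<g. complex_of_real (x j * (if snd m j then 1 else 0))))))"

lemma theta_tsum: "theta g m \<tau> = infsum (tsum g m \<tau>) (Zg g)"
  unfolding theta_def tsum_def ..

lemma tsum_split:
  "tsum (Suc h) m (blk (Suc h) \<tau>1 t) (a(h := k)) = tsum h (tr h m) \<tau>1 a * F1 (fst m h) (snd m h) t k"
proof -
  define x where "x = (\<lambda>j. of_int ((a(h := k)) j) + (if fst m j then 1/2 else 0) :: real)"
  define x' where "x' = (\<lambda>j. of_int (a j) + (if fst (tr h m) j then 1/2 else 0) :: real)"
  define y where "y = real_of_int k + (if fst m h then 1/2 else 0)"
  have xe: "x j = x' j" if "j < h" for j using that by (simp add: x_def x'_def tr_def)
  have xh: "x h = y" by (simp add: x_def y_def)
  define Q' where "Q' = (\<Sum>j<h. \<Sum>l<h. complex_of_real (x' j) * \<tau>1 j l * complex_of_real (x' l))"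
  define L' where "L' = (\<Sum>j<h. complex_of_real (x' j * (if snd (tr h m) j then 1 else 0)))"
  define q where "q = complex_of_real y * (\<i> * complex_of_real t) * complex_of_real y"
  define l where "l = complex_of_real (y * (if snd m h then 1 else 0))"
  have Q: "(\<Sum>j<Suc h. \<Sum>l<Suc h. complex_of_real (x j) * blk (Suc h) \<tau>1 t j l * complex_of_real (x l)) = Q' + q"
  proof -
    have "(\<Sum>j<Suc h. \<Sum>l<Suc h. complex_of_real (x j) * blk (Suc h) \<tau>1 t j l * complex_of_real (x l))
        = (\<Sum>j<h. \<Sum>l<h. complex_of_real (x j) * \<tau>1 j l * complex_of_real (x l))
          + complex_of_real (x h) * (\<i> * complex_of_real t) * complex_of_real (x h)"
      by (rule blk_quad)
    also have "complex_of_real (x h) * (\<i> * complex_of_real t) * complex_of_real (x h) = q"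
      using xh by (simp add: q_def)
    also have "(\<Sum>j<h. \<Sum>l<h. complex_of_real (x j) * \<tau>1 j l * complex_of_real (x l)) = Q'"
      unfolding Q'_def by (intro sum.cong refl) (simp add: xe)
    finally show ?thesis .
  qed
  have L: "(\<Sum>j<Suc h. complex_of_real (x j * (if snd m j then 1 else 0))) = L' + l"
  proof -
    have "(\<Sum>j<Suc h. complex_of_real (x j * (if snd m j then 1 else 0)))
        = (\<Sum>j<h. complex_of_real (x j * (if snd m j then 1 else 0))) + l"
      by (simp add: l_def xh)
    also have "(\<Sum>j<h. complex_of_real (x j * (if snd m j then 1 else 0))) = L'"
      unfolding L'_def by (intro sum.cong refl) (simp add: xe tr_def)
    finally show ?thesis .
  qed
  have "tsum (Suc h) m (blk (Suc h) \<tau>1 t) (a(h := k)) = exp (complex_of_real pi * \<i> * ((Q' + q) + (L' + l)))"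
    unfolding tsum_def Let_def x_def[symmetric] using Q L by simp
  also have "complex_of_real pi * \<i> * ((Q' + q) + (L' + l)) = complex_of_real pi * \<i> * (Q' + L') + complex_of_real pi * \<i> * (q + l)"
    by (simp add: algebra_simps)
  also have "exp \<dots> = exp (complex_of_real pi * \<i> * (Q' + L')) * exp (complex_of_real pi * \<i> * (q + l))"
    by (rule exp_add)
  also have "exp (complex_of_real pi * \<i> * (Q' + L')) = tsum h (tr h m) \<tau>1 a"
    unfolding tsum_def Let_def x'_def[symmetric] Q'_def L'_def ..
  also have "exp (complex_of_real pi * \<i> * (q + l)) = F1 (fst m h) (snd m h) t k"
    unfolding F1_def Let_def y_def[symmetric] q_def l_def ..
  finally show ?thesis .
qed

lemma theta_split:
  "theta (Suc h) m (blk (Suc h) \<tau>1 t) = theta h (tr h m) \<tau>1 * th1 (fst m h) (snd m h) t"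
proof -
  define \<beta> where "\<beta> p = (fst p)(h := snd p)" for p :: "(nat \<Rightarrow> int) \<times> int"
  have bij: "bij_betw \<beta> (Zg h \<times> UNIV) (Zg (Suc h))"
  proof (rule bij_betw_byWitness[where f'="\<lambda>n. (n(h := 0), n h)"])
    show "\<forall>p\<in>Zg h \<times> UNIV. ((\<beta> p)(h := 0), \<beta> p h) = p"
    proof
      fix p assume p: "p \<in> Zg h \<times> (UNIV :: int set)"
      then have "fst p h = 0" by (cases p) (simp add: Zg_def)
      then have "(\<beta> p)(h := 0) = fst p" by (auto simp: \<beta>_def fun_eq_iff)
      then show "((\<beta> p)(h := 0), \<beta> p h) = p" by (cases p) (simp add: \<beta>_def)
    qed
    show "\<forall>n\<in>Zg (Suc h). \<beta> (n(h := 0), n h) = n" by (simp add: \<beta>_def)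
    show "\<beta> ` (Zg h \<times> UNIV) \<subseteq> Zg (Suc h)" by (auto simp: \<beta>_def Zg_def)
    show "(\<lambda>n. (n(h := 0), n h)) ` Zg (Suc h) \<subseteq> Zg h \<times> UNIV"
      by (auto simp: Zg_def)
  qed
  have "theta (Suc h) m (blk (Suc h) \<tau>1 t) = infsum (tsum (Suc h) m (blk (Suc h) \<tau>1 t)) (Zg (Suc h))"
    by (rule theta_tsum)
  also have "\<dots> = infsum (\<lambda>p. tsum (Suc h) m (blk (Suc h) \<tau>1 t) (\<beta> p)) (Zg h \<times> UNIV)"
    by (rule infsum_reindex_bij_betw[OF bij, symmetric])
  also have "\<dots> = infsum (\<lambda>(a, k). tsum h (tr h m) \<tau>1 a * F1 (fst m h) (snd m h) t k) (Zg h \<times> UNIV)"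
    by (rule infsum_cong) (auto simp: \<beta>_def tsum_split)
  also have "\<dots> = infsum (tsum h (tr h m) \<tau>1) (Zg h) * infsum (F1 (fst m h) (snd m h) t) UNIV"
    by (rule infsum_product_unc)
  finally show ?thesis by (simp add: theta_tsum th1_def)
qed

lemma th1_lim: "((\<lambda>t. th1 e d t) \<longlongrightarrow> (if e then 0 else 1)) at_top"
  using th1_lim0 th1_lim1 by (cases e) auto

lemma main_unified:
  assumes s: "0 < s"
  shows "siegel_Phi_eq (Suc h) (Ssum (Suc h) i s)
     (\<lambda>\<tau>. 2 ^ (i + 1) * Ssum h i s \<tau> + (if i = 0 then 0 else Ssum h (i - 1) (2 * s) \<tau>))"
  unfolding siegel_Phi_eq_def
proof (intro ballI)
  fix \<tau>1 :: cmat
  define E where "E = even_cosets (Suc h) i"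
  have eq: "Ssum (Suc h) i s (blk (Suc h) \<tau>1 t)
      = (\<Sum>C\<in>E. (\<Prod>n\<in>C. theta h (tr h n) \<tau>1 * th1 (fst n h) (snd n h) t) ^ s)" for t
    unfolding Ssum_def E_def by (simp add: theta_split)
  have lim: "((\<lambda>t. \<Sum>C\<in>E. (\<Prod>n\<in>C. theta h (tr h n) \<tau>1 * th1 (fst n h) (snd n h) t) ^ s) \<longlongrightarrow>
      (\<Sum>C\<in>E. (\<Prod>n\<in>C. theta h (tr h n) \<tau>1 * (if fst n h then 0 else 1)) ^ s)) at_top"
    by (intro tendsto_sum tendsto_power tendsto_prod tendsto_mult tendsto_const th1_lim)
  have val: "(\<Sum>C\<in>E. (\<Prod>n\<in>C. theta h (tr h n) \<tau>1 * (if fst n h then 0 else 1)) ^ s)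
      = (\<Sum>C\<in>E. (\<Prod>n\<in>C. if fst n h then 0 else theta h (tr h n) \<tau>1) ^ s)"
    by (intro sum.cong refl arg_cong[where f="\<lambda>x. x ^ s"] prod.cong) auto
  also have "\<dots> = 2 ^ (i + 1) * Ssum h i s \<tau>1 + (if i = 0 then 0 else Ssum h (i - 1) (2 * s) \<tau>1)"
    unfolding E_def Ssum_def by (rule comb[OF s])
  finally show "((\<lambda>t. Ssum (Suc h) i s (blk (Suc h) \<tau>1 t)) \<longlongrightarrow>
      2 ^ (i + 1) * Ssum h i s \<tau>1 + (if i = 0 then 0 else Ssum h (i - 1) (2 * s) \<tau>1)) at_top"
    using lim unfolding eq by simp
qed

theorem mainTheorem6:
  fixes g i s :: nat
  assumes "1 \<le> g" and "i \<le> g" and "0 < s" and "(16::nat) dvd 2 ^ i * s"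
  shows "(0 < i \<and> i < g \<longrightarrow> siegel_Phi_eq g (Ssum g i s)
            (\<lambda>\<tau>. 2 ^ (i + 1) * Ssum (g - 1) i s \<tau> + Ssum (g - 1) (i - 1) (2 * s) \<tau>))
       \<and> (i = g \<longrightarrow> siegel_Phi_eq g (Ssum g g s) (Ssum (g - 1) (g - 1) (2 * s)))
       \<and> (i = 0 \<longrightarrow> siegel_Phi_eq g (Ssum g 0 s) (\<lambda>\<tau>. 2 * Ssum (g - 1) 0 s \<tau>))"
proof -
  obtain h where g: "g = Suc h" using assms(1) by (cases g) auto
  have U: "siegel_Phi_eq (Suc h) (Ssum (Suc h) j s)
     (\<lambda>\<tau>. 2 ^ (j + 1) * Ssum h j s \<tau> + (if j = 0 then 0 else Ssum h (j - 1) (2 * s) \<tau>))" for j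
    by (rule main_unified[OF assms(3)])
  have P1: "0 < i \<and> i < g \<longrightarrow> siegel_Phi_eq g (Ssum g i s)
            (\<lambda>\<tau>. 2 ^ (i + 1) * Ssum (g - 1) i s \<tau> + Ssum (g - 1) (i - 1) (2 * s) \<tau>)"
  proof
    assume "0 < i \<and> i < g"
    then have "i \<noteq> 0" by simp
    then show "siegel_Phi_eq g (Ssum g i s)
            (\<lambda>\<tau>. 2 ^ (i + 1) * Ssum (g - 1) i s \<tau> + Ssum (g - 1) (i - 1) (2 * s) \<tau>)"
      using U[of i] g by simp
  qed
  have P2: "i = g \<longrightarrow> siegel_Phi_eq g (Ssum g g s) (Ssum (g - 1) (g - 1) (2 * s))"
  proof
    have z: "Ssum h (Suc h) s \<tau> = 0" for \<tau> by (simp add: Ssum_def even_cosets_empty)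
    have "(\<lambda>\<tau>. 2 ^ (Suc h + 1) * Ssum h (Suc h) s \<tau> + (if Suc h = 0 then 0 else Ssum h (Suc h - 1) (2 * s) \<tau>))
        = Ssum h h (2 * s)" by (rule ext) (simp add: z)
    then show "siegel_Phi_eq g (Ssum g g s) (Ssum (g - 1) (g - 1) (2 * s))"
      using U[of "Suc h"] g by simp
  qed
  have P3: "i = 0 \<longrightarrow> siegel_Phi_eq g (Ssum g 0 s) (\<lambda>\<tau>. 2 * Ssum (g - 1) 0 s \<tau>)"
    using U[of 0] g by simp
  show ?thesis using P1 P2 P3 by blast
qed


end
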